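(* Let $q$ be a prime power, $\eta\ge0$ an integer with $\eta\neq1$, and $(\delta_T,\delta_X)\in\mathbb{Z}\times\mathbb{N}$ with $\delta=\delta_T+\eta\delta_X\ge0$. Let $F\in R(\delta_T,\delta_X)$ be a polynomial that does not vanish at all $\mathbb{F}_q$-rational points of $\mathcal{H}_\eta$, and let $\mathcal{C}=\mathcal{Z}(F)$ (a non-filling curve of class $\delta_T\mathcal{F}+\delta_X\sigma$). Then: If $\eta\ge2$: (i) if $q>\delta$: $\#\mathcal{C}(\mathbb{F}_q)\le(q+1)\delta_T$ if $\delta_X=0$ and $\delta_T\ge0$, and $\#\mathcal{C}(\mathbb{F}_q)\le q(\delta+1)+1$ otherwise; (ii) if $\max\big(\frac{\delta}{\eta+1},\delta_T\big)<q\le\delta$: $\#\mathcal{C}(\mathbb{F}_q)\le q^2+q+1+\big\lfloor\frac{\delta-q}{\eta}\big\rfloor$; (iii) if $q\le\max\big(\frac{\delta}{\eta+1},\delta_T\big)$ and $q\ge\delta_X$: $\#\mathcal{C}(\mathbb{F}_q)\le q^2+q+\delta_X$. If $\eta=0$: $\#\mathcal{C}(\mathbb{F}_q)\le(q+1)^2-\max(q-\delta_X+1,1)\max(q-\delta_T+1,1)$. Moreover, in each case the bound is attained by some such $F$.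
   Context: $R=\mathbb{F}_q[T_1,T_2,X_1,X_2]$; the bidegree of $T_1^{c_1}T_2^{c_2}X_1^{d_1}X_2^{d_2}$ is $(c_1+c_2-\eta d_1,d_1+d_2)$; $R(\delta_T,\delta_X)$ is the span of monomials of that bidegree. The Hirzebruch surface $\mathcal{H}_\eta$ is the quotient of $(\mathbb{A}^2\setminus\{0\})^2$ by $\mathbb{G}_m^2$ acting by $(\lambda,\mu)\cdot(t_1,t_2,x_1,x_2)=(\lambda t_1,\lambda t_2,\mu\lambda^{-\eta}x_1,\mu x_2)$; its $\mathbb{F}_q$-points ($(q+1)^2$ of them) each have a unique representative $(1,a,1,b)$, $(0,1,1,b)$, $(1,a,0,1)$ or $(0,1,0,1)$ ($a,b\in\mathbb{F}_q$), where polynomials are evaluated. $\#\mathcal{C}(\mathbb{F}_q)$ is the number of $\mathbb{F}_q$-points $P$ with $F(P)=0$. $\mathcal{F}$ and $\sigma$ denote the classes of the fiber and section generating $\mathrm{Pic}\,\mathcal{H}_\eta$; a polynomial in $R(\delta_T,\delta_X)$ defines a curve of class $\delta_T\mathcal{F}+\delta_X\sigma$. *)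

theory Defs
  imports Complex_Main
begin

text \<open>Monomials T1^c1 T2^c2 X1^d1 X2^d2 are encoded by exponent tuples (c1,c2,d1,d2).
  A polynomial of R = F_q[T1,T2,X1,X2] is encoded by its coefficient function.\<close>

type_synonym expo = "nat \<times> nat \<times> nat \<times> nat"

definition bideg :: "nat \<Rightarrow> expo \<Rightarrow> int \<times> nat" where
  "bideg \<eta> m = (case m of (c1, c2, d1, d2) \<Rightarrow>
      (int c1 + int c2 - int \<eta> * int d1, d1 + d2))"

definition in_R :: "nat \<Rightarrow> int \<Rightarrow> nat \<Rightarrow> (expo \<Rightarrow> 'a::zero) \<Rightarrow> bool" where
  "in_R \<eta> dT dX F \<longleftrightarrow> (\<forall>m. F m \<noteq> 0 \<longrightarrow> bideg \<eta> m = (dT, dX))"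

definition eval_poly :: "(expo \<Rightarrow> 'a::comm_ring_1) \<Rightarrow> 'a \<times> 'a \<times> 'a \<times> 'a \<Rightarrow> 'a" where
  "eval_poly F P = (case P of (t1, t2, x1, x2) \<Rightarrow>
      (\<Sum>m\<in>{m. F m \<noteq> 0}. case m of (c1, c2, d1, d2) \<Rightarrow>
          F m * t1 ^ c1 * t2 ^ c2 * x1 ^ d1 * x2 ^ d2))"

text \<open>Canonical representatives of the rational points of the Hirzebruch surface.\<close>
definition hirz_points :: "('a::comm_ring_1 \<times> 'a \<times> 'a \<times> 'a) set" where
  "hirz_points =
     {(1, a, 1, b) | a b. True} \<union> {(0, 1, 1, b) | b. True} \<union>
     {(1, a, 0, 1) | a. True} \<union> {(0, 1, 0, 1)}"

definition num_points :: "(expo \<Rightarrow> 'a::comm_ring_1) \<Rightarrow> nat" where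
  "num_points F = card {P \<in> hirz_points. eval_poly F P = 0}"

definition non_filling :: "(expo \<Rightarrow> 'a::comm_ring_1) \<Rightarrow> bool" where
  "non_filling F \<longleftrightarrow> (\<exists>P\<in>hirz_points. eval_poly F P \<noteq> 0)"

definition sharp_bound :: "'a::{field,finite} itself \<Rightarrow> nat \<Rightarrow> int \<Rightarrow> nat \<Rightarrow> int \<Rightarrow> bool" where
  "sharp_bound _ \<eta> dT dX B \<longleftrightarrow>
     (\<forall>F :: expo \<Rightarrow> 'a. in_R \<eta> dT dX F \<and> non_filling F \<longrightarrow> int (num_points F) \<le> B) \<and>
     (\<exists>F :: expo \<Rightarrow> 'a. in_R \<eta> dT dX F \<and> non_filling F \<and> int (num_points F) = B)"

end

theory Submission
  imports Defs "HOL-Computational_Algebra.Polynomial"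
begin
definition P1 :: "('a::comm_ring_1 \<times> 'a) set" where
  "P1 = range (\<lambda>a. (1,a)) \<union> {(0,1)}"

lemma finite_P1[simp]: "finite (P1 :: ('a::{comm_ring_1,finite} \<times> 'a) set)"
  unfolding P1_def by simp

lemma card_P1: "card (P1 :: ('a::{field,finite} \<times> 'a) set) = card (UNIV::'a set) + 1"
proof -
  have "inj (\<lambda>a::'a. (1::'a,a))" by (auto simp: inj_def)
  hence "card (range (\<lambda>a::'a. (1::'a,a))) = card (UNIV::'a set)" by (simp add: card_image)
  moreover have "(0::'a,1::'a) \<notin> range (\<lambda>a::'a. (1::'a,a))" by auto
  ultimately show ?thesis unfolding P1_def by simp
qed

lemma P1_cases: "t \<in> P1 \<Longrightarrow> (\<And>a. t = (1,a) \<Longrightarrow> P) \<Longrightarrow> (t = (0,1) \<Longrightarrow> P) \<Longrightarrow> P"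
  unfolding P1_def by auto

lemma P1_I1[simp]: "(1,a) \<in> P1" and P1_I2[simp]: "(0,1) \<in> P1"
  unfolding P1_def by auto

definition pt :: "('a \<times> 'a) \<Rightarrow> ('a \<times> 'a) \<Rightarrow> 'a \<times> 'a \<times> 'a \<times> 'a" where
  "pt t x = (fst t, snd t, fst x, snd x)"

lemma hirz_eq: "hirz_points = (\<lambda>(t,x). pt t x) ` (P1 \<times> P1)"
proof (rule equalityI)
  show "hirz_points \<subseteq> (\<lambda>(t,x). pt t x) ` (P1 \<times> P1)"
  proof
    fix P assume "P \<in> hirz_points"
    then consider a b where "P = (1,a,1,b)" | b where "P = (0,1,1,b)" | a where "P = (1,a,0,1)" | "P = (0,1,0,1)"
      unfolding hirz_points_def by blast
    thus "P \<in> (\<lambda>(t,x). pt t x) ` (P1 \<times> P1)"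
    proof cases
      case (1 a b) thus ?thesis by (intro rev_image_eqI[of "((1,a),(1,b))"]) (auto simp: pt_def)
    next
      case (2 b) thus ?thesis by (intro rev_image_eqI[of "((0,1),(1,b))"]) (auto simp: pt_def)
    next
      case (3 a) thus ?thesis by (intro rev_image_eqI[of "((1,a),(0,1))"]) (auto simp: pt_def)
    next
      case 4 thus ?thesis by (intro rev_image_eqI[of "((0,1),(0,1))"]) (auto simp: pt_def)
    qed
  qed
  show "(\<lambda>(t,x). pt t x) ` (P1 \<times> P1) \<subseteq> hirz_points"
    unfolding hirz_points_def P1_def pt_def by auto
qed

lemma inj_pt: "inj_on (\<lambda>(t,x). pt t x) A"
  by (auto simp: inj_on_def pt_def prod_eq_iff)

definition ev :: "(expo \<Rightarrow> 'a::comm_ring_1) \<Rightarrow> 'a \<times> 'a \<Rightarrow> 'a \<times> 'a \<Rightarrow> 'a" where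
  "ev F t x = eval_poly F (pt t x)"

lemma num_points_sum:
  fixes F :: "expo \<Rightarrow> 'a::{field,finite}"
  shows "num_points F = (\<Sum>t\<in>P1. card {x\<in>P1. ev F t x = 0})"
proof -
  have "{P \<in> hirz_points. eval_poly F P = 0} = (\<lambda>(t,x). pt t x) ` (SIGMA t:P1. {x\<in>P1. ev F t x = 0})"
    unfolding hirz_eq ev_def by auto
  hence "num_points F = card (SIGMA t:P1. {x\<in>P1. ev F t x = 0})"
    unfolding num_points_def by (simp add: card_image inj_pt)
  also have "\<dots> = (\<Sum>t\<in>P1. card {x\<in>P1. ev F t x = 0})"
    by (rule card_SigmaI) auto
  finally show ?thesis .
qed

lemma non_filling_ev:
  fixes F :: "expo \<Rightarrow> 'a::{field,finite}"
  shows "non_filling F \<longleftrightarrow> (\<exists>t\<in>P1. \<exists>x\<in>P1. ev F t x \<noteq> 0)"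
  unfolding non_filling_def hirz_eq ev_def by auto

lemma card_P1_zero:
  fixes f :: "'a::{field,finite} \<times> 'a \<Rightarrow> 'b::zero"
  shows "card {x\<in>P1. f x = 0} = card {a. f (1,a) = 0} + (if f (0,1) = 0 then 1 else 0)"
proof -
  have e: "{x\<in>P1. f x = 0} = (\<lambda>a. (1,a)) ` {a. f (1,a) = 0} \<union> (if f (0,1) = 0 then {(0,1)} else {})"
    unfolding P1_def by auto
  have "card ((\<lambda>a. (1::'a,a)) ` {a. f (1,a) = 0}) = card {a. f (1,a) = 0}"
    by (rule card_image) (auto simp: inj_on_def)
  moreover have "(0,1) \<notin> (\<lambda>a. (1::'a,a)) ` {a. f (1,a) = 0}" by auto
  ultimately show ?thesis unfolding e by (auto simp: card_insert_if)
qed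

lemma card_P1_le: "card {x\<in>(P1::('a::{field,finite}\<times>'a) set). Q x} \<le> card (UNIV::'a set) + 1"
  by (metis (no_types, lifting) card_P1 card_mono finite_P1 mem_Collect_eq subsetI)

definition nj :: "nat \<Rightarrow> int \<Rightarrow> nat \<Rightarrow> nat" where
  "nj \<eta> dT j = nat (dT + int \<eta> * int j)"

definition phi :: "nat \<Rightarrow> int \<Rightarrow> nat \<Rightarrow> (expo \<Rightarrow> 'a::comm_ring_1) \<Rightarrow> nat \<Rightarrow> 'a \<times> 'a \<Rightarrow> 'a" where
  "phi \<eta> dT dX F j t = (if dT + int \<eta> * int j \<ge> 0 then
     (\<Sum>i\<le>nj \<eta> dT j. F (nj \<eta> dT j - i, i, j, dX - j) * fst t ^ (nj \<eta> dT j - i) * snd t ^ i) else 0)"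

lemma eval_struct:
  fixes F :: "expo \<Rightarrow> 'a::comm_ring_1"
  assumes R: "in_R \<eta> dT dX F"
  shows "eval_poly F (t1,t2,x1,x2) = (\<Sum>j\<le>dX. phi \<eta> dT dX F j (t1,t2) * x1^j * x2^(dX-j))"
proof -
  define J where "J = {j. j \<le> dX \<and> dT + int \<eta> * int j \<ge> 0}"
  define I where "I = (SIGMA j:J. {..nj \<eta> dT j})"
  define mon where "mon = (\<lambda>(j,i). (nj \<eta> dT j - i, i, j, dX - j))"
  define g where "g = (\<lambda>m. case m of (c1, c2, d1, d2) \<Rightarrow>
          F m * t1 ^ c1 * t2 ^ c2 * x1 ^ d1 * x2 ^ d2)"
  have finJ: "finite J" unfolding J_def by auto
  have finI: "finite I" unfolding I_def using finJ by auto
  have sub: "{m. F m \<noteq> 0} \<subseteq> mon ` I"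
  proof
    fix m assume "m \<in> {m. F m \<noteq> 0}"
    hence b: "bideg \<eta> m = (dT, dX)" using R unfolding in_R_def by blast
    obtain c1 c2 d1 d2 where m: "m = (c1,c2,d1,d2)" by (cases m) auto
    have e1: "int c1 + int c2 - int \<eta> * int d1 = dT" and e2: "d1 + d2 = dX"
      using b unfolding m bideg_def by auto
    have "d1 \<in> J" unfolding J_def using e1 e2 by auto
    moreover have "nj \<eta> dT d1 = c1 + c2" unfolding nj_def using e1 by auto
    ultimately have "(d1, c2) \<in> I" "mon (d1,c2) = m"
      unfolding I_def mon_def m using e2 by auto
    thus "m \<in> mon ` I" by (metis image_eqI)
  qed
  have inj: "inj_on mon I"
    unfolding inj_on_def mon_def I_def by auto
  have "eval_poly F (t1,t2,x1,x2) = sum g {m. F m \<noteq> 0}"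
    unfolding eval_poly_def g_def by simp
  also have "\<dots> = sum g (mon ` I)"
    by (rule sum.mono_neutral_left) (use finI sub in \<open>auto simp: g_def split: prod.splits\<close>)
  also have "\<dots> = sum (g \<circ> mon) I" by (rule sum.reindex[OF inj])
  also have "\<dots> = (\<Sum>j\<in>J. \<Sum>i\<le>nj \<eta> dT j. g (mon (j,i)))"
    unfolding I_def by (subst sum.Sigma) (use finJ in auto)
  also have "\<dots> = (\<Sum>j\<in>J. phi \<eta> dT dX F j (t1,t2) * x1^j * x2^(dX-j))"
  proof (rule sum.cong[OF refl])
    fix j assume "j \<in> J"
    hence "dT + int \<eta> * int j \<ge> 0" unfolding J_def by auto
    thus "(\<Sum>i\<le>nj \<eta> dT j. g (mon (j,i))) = phi \<eta> dT dX F j (t1,t2) * x1^j * x2^(dX-j)"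
      unfolding phi_def g_def mon_def by (simp add: sum_distrib_left sum_distrib_right mult_ac)
  qed
  also have "\<dots> = (\<Sum>j\<le>dX. phi \<eta> dT dX F j (t1,t2) * x1^j * x2^(dX-j))"
    by (rule sum.mono_neutral_left) (auto simp: J_def phi_def)
  finally show ?thesis .
qed

lemma phi_neg: "dT + int \<eta> * int j < 0 \<Longrightarrow> phi \<eta> dT dX F j t = 0"
  unfolding phi_def by auto

definition binform :: "nat \<Rightarrow> ('a::comm_ring_1 \<times> 'a \<Rightarrow> 'a) \<Rightarrow> bool" where
  "binform n h \<longleftrightarrow> (\<exists>p. degree p \<le> n \<and> (\<forall>a. h (1,a) = poly p a) \<and> h (0,1) = coeff p n)"

lemma binform_T:
  "binform n (\<lambda>t. \<Sum>i\<le>n. c i * fst t ^ (n - i) * snd t ^ i)"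
  unfolding binform_def
proof (intro exI conjI allI)
  let ?p = "\<Sum>i\<le>n. monom (c i) i"
  show "degree ?p \<le> n" by (rule degree_sum_le) (auto intro: order.trans[OF degree_monom_le])
  fix a show "(\<Sum>i\<le>n. c i * fst (1, a) ^ (n - i) * snd (1, a) ^ i) = poly ?p a"
    by (simp add: poly_sum poly_monom)
next
  let ?p = "\<Sum>i\<le>n. monom (c i) i"
  have "(\<Sum>i\<le>n. c i * fst (0::'a, 1::'a) ^ (n - i) * snd (0::'a, 1::'a) ^ i) = (\<Sum>i\<le>n. if i = n then c i else 0)"
    by (rule sum.cong) (auto simp: power_0_left)
  also have "\<dots> = c n" by simp
  also have "\<dots> = coeff ?p n" by (simp add: coeff_sum)
  finally show "(\<Sum>i\<le>n. c i * fst (0::'a, 1::'a) ^ (n - i) * snd (0::'a, 1::'a) ^ i) = coeff ?p n" .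
qed

lemma binform_X:
  "binform n (\<lambda>x. \<Sum>j\<le>n. c j * fst x ^ j * snd x ^ (n - j))"
  unfolding binform_def
proof (intro exI conjI allI)
  let ?p = "\<Sum>j\<le>n. monom (c j) (n - j)"
  show "degree ?p \<le> n" by (rule degree_sum_le) (auto intro: order.trans[OF degree_monom_le])
  fix a show "(\<Sum>j\<le>n. c j * fst (1, a) ^ j * snd (1, a) ^ (n - j)) = poly ?p a"
    by (simp add: poly_sum poly_monom)
next
  let ?p = "\<Sum>j\<le>n. monom (c j) (n - j)"
  have "(\<Sum>j\<le>n. c j * fst (0::'a, 1::'a) ^ j * snd (0::'a, 1::'a) ^ (n - j)) = (\<Sum>j\<le>n. if j = 0 then c j else 0)"
    by (rule sum.cong) (auto simp: power_0_left)
  also have "\<dots> = c 0" by simp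
  also have "\<dots> = (\<Sum>j\<le>n. if j = 0 then c j else 0)" by simp
  also have "\<dots> = (\<Sum>j\<le>n. if n - j = n then c j else 0)"
    by (rule sum.cong) auto
  also have "\<dots> = coeff ?p n" by (simp add: coeff_sum coeff_monom)
  finally show "(\<Sum>j\<le>n. c j * fst (0::'a, 1::'a) ^ j * snd (0::'a, 1::'a) ^ (n - j)) = coeff ?p n" .
qed

lemma binform_phi:
  assumes "dT + int \<eta> * int j \<ge> 0"
  shows "binform (nj \<eta> dT j) (phi \<eta> dT dX F j)"
proof -
  have "phi \<eta> dT dX F j = (\<lambda>t. \<Sum>i\<le>nj \<eta> dT j. F (nj \<eta> dT j - i, i, j, dX - j) * fst t ^ (nj \<eta> dT j - i) * snd t ^ i)"
    using assms unfolding phi_def by auto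
  thus ?thesis by (simp add: binform_T)
qed

lemma binform_zero: "binform n (\<lambda>t. 0)"
  unfolding binform_def by (intro exI[of _ 0]) auto

lemma binform_lin:
  assumes "binform n f" "binform n g"
  shows "binform n (\<lambda>t. f t + c * g t)"
proof -
  obtain p where p: "degree p \<le> n" "\<forall>a. f (1,a) = poly p a" "f (0,1) = coeff p n"
    using assms(1) unfolding binform_def by blast
  obtain r where r: "degree r \<le> n" "\<forall>a. g (1,a) = poly r a" "g (0,1) = coeff r n"
    using assms(2) unfolding binform_def by blast
  show ?thesis unfolding binform_def
    by (intro exI[of _ "p + smult c r"]) (use p r in \<open>auto intro: degree_add_le order.trans[OF degree_smult_le]\<close>)
qed

lemma binform_sum:
  assumes "finite S" "\<And>j. j \<in> S \<Longrightarrow> binform n (f j)"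
  shows "binform n (\<lambda>t. \<Sum>j\<in>S. c j * f j t)"
  using assms
proof (induction S rule: finite_induct)
  case empty thus ?case by (simp add: binform_zero)
next
  case (insert x S)
  have "binform n (\<lambda>t. (\<Sum>j\<in>S. c j * f j t) + c x * f x t)"
    by (rule binform_lin) (use insert in auto)
  thus ?case using insert by (simp add: add.commute)
qed

lemma binform_roots:
  fixes h :: "'a::{field,finite} \<times> 'a \<Rightarrow> 'a"
  assumes "binform n h" "t0 \<in> P1" "h t0 \<noteq> 0"
  shows "card {t\<in>P1. h t = 0} \<le> n"
proof -
  obtain p where p: "degree p \<le> n" "\<forall>a. h (1,a) = poly p a" "h (0,1) = coeff p n"
    using assms(1) unfolding binform_def by blast
  have "p \<noteq> 0" using assms(2,3) p by (auto elim!: P1_cases)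
  have c: "card {t\<in>P1. h t = 0} = card {a. poly p a = 0} + (if coeff p n = 0 then 1 else 0)"
    using card_P1_zero[of h] p by simp
  have r: "card {a. poly p a = 0} \<le> degree p" by (rule card_poly_roots_bound[OF \<open>p \<noteq> 0\<close>])
  show ?thesis
  proof (cases "coeff p n = 0")
    case True
    have "degree p \<noteq> n" using True \<open>p \<noteq> 0\<close> by auto
    hence "degree p < n" using p(1) by auto
    thus ?thesis using c r True by auto
  next
    case False thus ?thesis using c r p(1) by auto
  qed
qed

lemma ev_struct:
  fixes F :: "expo \<Rightarrow> 'a::comm_ring_1"
  assumes "in_R \<eta> dT dX F"
  shows "ev F t x = (\<Sum>j\<le>dX. phi \<eta> dT dX F j t * fst x^j * snd x^(dX-j))"
  unfolding ev_def pt_def using eval_struct[OF assms, of "fst t" "snd t" "fst x" "snd x"] by simp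

lemma ev_sigma0:
  assumes "in_R \<eta> dT dX F"
  shows "ev F t (0,1) = phi \<eta> dT dX F 0 t"
proof -
  have "ev F t (0,1) = (\<Sum>j\<le>dX. if j = 0 then phi \<eta> dT dX F j t else 0)"
    unfolding ev_struct[OF assms] by (rule sum.cong) (auto simp: power_0_left)
  thus ?thesis by simp
qed

lemma ev_aff:
  assumes "in_R \<eta> dT dX F"
  shows "ev F t (1,y) = (\<Sum>j\<le>dX. phi \<eta> dT dX F j t * y^(dX-j))"
  unfolding ev_struct[OF assms] by simp

lemma binform_fiber:
  assumes "in_R \<eta> dT dX F"
  shows "binform dX (ev F t)"
proof -
  have "ev F t = (\<lambda>x. \<Sum>j\<le>dX. phi \<eta> dT dX F j t * fst x^j * snd x^(dX-j))"
    by (rule ext) (rule ev_struct[OF assms])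
  thus ?thesis by (simp add: binform_X)
qed

lemma binform_eta0:
  assumes "in_R 0 dT dX F" "dT \<ge> 0"
  shows "binform (nat dT) (\<lambda>t. ev F t x)"
proof -
  have "(\<lambda>t. ev F t x) = (\<lambda>t. \<Sum>j\<in>{..dX}. (fst x^j * snd x^(dX-j)) * phi 0 dT dX F j t)"
    using ev_struct[OF assms(1)] by (auto simp: mult_ac)
  moreover have "binform (nat dT) (\<lambda>t. \<Sum>j\<in>{..dX}. (fst x^j * snd x^(dX-j)) * phi 0 dT dX F j t)"
  proof (rule binform_sum)
    fix j assume "j \<in> {..dX}"
    show "binform (nat dT) (phi 0 dT dX F j)"
      using binform_phi[of dT 0 j dX F] assms(2) by (simp add: nj_def)
  qed simp
  ultimately show ?thesis by simp
qed

lemma fiber_bound: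
  fixes F :: "expo \<Rightarrow> 'a::{field,finite}"
  defines "Q \<equiv> card (UNIV :: 'a set)"
  assumes nf: "\<And>t. t \<in> P1 \<Longrightarrow> \<not>(\<forall>x\<in>P1. ev F t x = 0) \<Longrightarrow> card {x\<in>P1. ev F t x = 0} \<le> b"
    and b: "b \<le> Q + 1"
    and Z: "card {t\<in>P1. \<forall>x\<in>P1. ev F t x = 0} \<le> Z0" and Z0: "Z0 \<le> Q + 1"
  shows "num_points F \<le> Z0 * (Q + 1) + (Q + 1 - Z0) * b"
proof -
  let ?Z = "{t\<in>P1. \<forall>x\<in>P1. ev F t x = 0}"
  let ?N = "\<lambda>t. card {x\<in>P1. ev F t x = 0}"
  have fZ: "finite ?Z" by simp
  have cP: "card (P1::('a\<times>'a) set) = Q + 1" unfolding Q_def by (rule card_P1)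
  have "num_points F = (\<Sum>t\<in>P1. ?N t)" by (rule num_points_sum)
  also have "\<dots> = (\<Sum>t\<in>?Z. ?N t) + (\<Sum>t\<in>P1 - ?Z. ?N t)"
    using sum.subset_diff[of ?Z P1 ?N] by (auto simp: add.commute)
  also have "(\<Sum>t\<in>?Z. ?N t) \<le> (\<Sum>t\<in>?Z. Q + 1)"
    by (rule sum_mono) (use card_P1_le Q_def in auto)
  also have "(\<Sum>t\<in>P1 - ?Z. ?N t) \<le> (\<Sum>t\<in>P1 - ?Z. b)"
    by (rule sum_mono) (use nf in auto)
  also have "(\<Sum>t\<in>?Z. Q + 1) + (\<Sum>t\<in>P1 - ?Z. b) = card ?Z * (Q+1) + (Q + 1 - card ?Z) * b"
    using cP by (simp add: card_Diff_subset)
  also have "\<dots> \<le> Z0 * (Q + 1) + (Q + 1 - Z0) * b"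
  proof -
    have "card ?Z \<le> Z0" using Z .
    then obtain k where k: "Z0 = card ?Z + k" using le_Suc_ex by blast
    have "card ?Z \<le> Q + 1" using Z Z0 by auto
    have "Q + 1 - card ?Z = (Q + 1 - Z0) + k" using k Z0 by simp
    hence "(Q + 1 - card ?Z) * b = (Q + 1 - Z0) * b + k * b" by (simp add: algebra_simps)
    moreover have "k * b \<le> k * (Q + 1)" using b by (rule mult_le_mono2)
    ultimately show ?thesis using k by (simp add: algebra_simps)
  qed
  finally show ?thesis by simp
qed

lemma num_points_aff:
  fixes F :: "expo \<Rightarrow> 'a::{field,finite}"
  assumes "in_R \<eta> dT dX F"
  shows "num_points F = card {t\<in>P1. phi \<eta> dT dX F 0 t = 0} + (\<Sum>t\<in>P1. card {y. ev F t (1,y) = 0})"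
proof -
  have "num_points F = (\<Sum>t\<in>P1. card {y. ev F t (1,y) = 0} + (if phi \<eta> dT dX F 0 t = 0 then 1 else 0))"
    unfolding num_points_sum by (rule sum.cong) (auto simp: card_P1_zero ev_sigma0[OF assms])
  also have "\<dots> = (\<Sum>t\<in>P1. card {y. ev F t (1,y) = 0}) + card {t\<in>P1. phi \<eta> dT dX F 0 t = 0}"
    by (simp add: sum.distrib sum.If_cases Int_def)
  finally show ?thesis by simp
qed

lemma card_field_ge2: "card (UNIV :: 'a::{field,finite} set) \<ge> 2"
proof -
  have "{0::'a, 1} \<subseteq> UNIV" by simp
  hence "card {0::'a, 1} \<le> card (UNIV::'a set)" by (rule card_mono[OF finite_UNIV])
  thus ?thesis by simp
qed

lemma pow_card: "(x::'a::{field,finite}) ^ card (UNIV :: 'a set) = x"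
proof (cases "x = 0")
  case True thus ?thesis using card_field_ge2[where 'a='a] by simp
next
  case False
  let ?S = "UNIV - {0::'a}"
  have bij: "bij_betw (\<lambda>y. x * y) ?S ?S"
    unfolding bij_betw_def inj_on_def using False
    by (auto intro!: image_eqI[where x="inverse x * _"] simp: field_simps)
  have "(\<Prod>y\<in>?S. x * y) = (\<Prod>y\<in>?S. y)"
    using prod.reindex_bij_betw[OF bij, of "\<lambda>y. y"] by simp
  moreover have "(\<Prod>y\<in>?S. x * y) = x ^ card ?S * (\<Prod>y\<in>?S. y)"
    by (simp add: prod.distrib)
  moreover have "(\<Prod>y\<in>?S. y) \<noteq> 0" by (simp add: prod_zero_iff)
  ultimately have "x ^ card ?S = 1" by simp
  moreover have "card ?S = card (UNIV::'a set) - 1" by (simp add: card_Diff_subset)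
  ultimately have "x ^ (card (UNIV::'a set) - 1) = 1" by simp
  hence "x ^ (card (UNIV::'a set) - 1) * x = x" by simp
  moreover have "card (UNIV::'a set) - 1 + 1 = card (UNIV::'a set)" using card_field_ge2[where 'a='a] by simp
  ultimately show ?thesis by (metis power_Suc2 Suc_eq_plus1)
qed

lemma coeff_revsum:
  "coeff (\<Sum>j\<le>N. monom (c j) (N - j)) k = (if k \<le> N then c (N - k) else 0)"
proof -
  have "coeff (\<Sum>j\<le>N. monom (c j) (N - j)) k = (\<Sum>j\<le>N. if j = N - k \<and> k \<le> N then c j else 0)"
    unfolding coeff_sum coeff_monom by (rule sum.cong) auto
  also have "\<dots> = (if k \<le> N then c (N - k) else 0)" by (auto simp: sum.delta)
  finally show ?thesis .
qed

lemma poly_revsum: fixes c :: "nat \<Rightarrow> 'a::comm_ring_1" shows "poly (\<Sum>j\<le>N. monom (c j) (N - j)) y = (\<Sum>j\<le>N. c j * y ^ (N - j))"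
  by (simp add: poly_sum poly_monom)

lemma aff_roots:
  fixes c :: "nat \<Rightarrow> 'a::{field,finite}"
  assumes "\<forall>j<v. c j = 0" "v \<le> N" "c v \<noteq> 0"
  shows "card {y. (\<Sum>j\<le>N. c j * y ^ (N - j)) = 0} \<le> N - v"
proof -
  let ?p = "\<Sum>j\<le>N. monom (c j) (N - j)"
  have "coeff ?p (N - v) \<noteq> 0" using assms by (simp add: coeff_revsum)
  hence "?p \<noteq> 0" by auto
  have "degree ?p \<le> N - v"
  proof (rule degree_le, intro allI impI)
    fix k assume "N - v < k"
    thus "coeff ?p k = 0" using assms(1) by (auto simp: coeff_revsum)
  qed
  moreover have "card {y. poly ?p y = 0} \<le> degree ?p" by (rule card_poly_roots_bound[OF \<open>?p \<noteq> 0\<close>])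
  ultimately show ?thesis by (simp add: poly_revsum)
qed

definition red :: "nat \<Rightarrow> nat \<Rightarrow> nat" where
  "red Q m = (if m \<ge> Q then m - (Q - 1) else m)"

lemma pow_red:
  fixes y :: "'a::{field,finite}"
  shows "y ^ red (card (UNIV::'a set)) m = y ^ m"
proof (cases "m \<ge> card (UNIV::'a set)")
  case True
  let ?Q = "card (UNIV::'a set)"
  have Q: "?Q \<ge> 2" by (rule card_field_ge2)
  have "y ^ m = y ^ (m - ?Q) * y ^ ?Q" using True by (simp flip: power_add)
  also have "\<dots> = y ^ (m - ?Q) * y" by (simp add: pow_card)
  also have "\<dots> = y ^ (m - ?Q + 1)" by simp
  also have "m - ?Q + 1 = m - (?Q - 1)" using True Q by simp
  finally have "y ^ m = y ^ (m - (?Q - 1))" .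
  thus ?thesis unfolding red_def using True by simp
qed (simp add: red_def)

definition redpoly :: "nat \<Rightarrow> nat \<Rightarrow> (nat \<Rightarrow> 'a::comm_ring_1) \<Rightarrow> 'a poly" where
  "redpoly Q e g = (\<Sum>i\<le>e. monom (g i) (red Q (e - i)))"

lemma poly_redpoly:
  fixes g :: "nat \<Rightarrow> 'a::{field,finite}"
  shows "poly (redpoly (card (UNIV::'a set)) e g) y = (\<Sum>i\<le>e. g i * y ^ (e - i))"
  unfolding redpoly_def by (simp add: poly_sum poly_monom pow_red)

lemma coeff_redpoly_high:
  assumes "e + 2 \<le> 2 * Q" "Q \<ge> 1" "k \<ge> Q"
  shows "coeff (redpoly Q e g) k = 0"
  unfolding redpoly_def coeff_sum coeff_monom
  by (rule sum.neutral) (use assms in \<open>auto simp: red_def split: if_splits\<close>)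

lemma coeff_redpoly_mid:
  assumes "e = Q + s" "s + 2 \<le> k" "k < Q"
  shows "coeff (redpoly Q e g) k = g (e - k)"
proof -
  have "coeff (redpoly Q e g) k = (\<Sum>i\<le>e. if i = e - k then g i else 0)"
    unfolding redpoly_def coeff_sum coeff_monom
    by (rule sum.cong) (use assms in \<open>auto simp: red_def split: if_splits\<close>)
  also have "\<dots> = g (e - k)" using assms by (auto simp: sum.delta)
  finally show ?thesis .
qed

lemma sum_two_level:
  fixes f :: "'b \<Rightarrow> nat"
  assumes "finite A" "R \<subseteq> A" "card R \<le> w" "w \<le> card A"
    "\<And>t. t \<in> R \<Longrightarrow> f t \<le> hi" "\<And>t. t \<in> A - R \<Longrightarrow> f t \<le> lo" "lo \<le> hi"
  shows "sum f A \<le> w * hi + (card A - w) * lo"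
proof -
  have "sum f A = sum f R + sum f (A - R)"
    using sum.subset_diff[OF assms(2,1), of f] by (simp add: add.commute)
  also have "\<dots> \<le> card R * hi + card (A - R) * lo"
    using sum_mono[of R f "\<lambda>_. hi"] sum_mono[of "A - R" f "\<lambda>_. lo"] assms(5,6) by (intro add_mono) auto
  also have "card (A - R) = card A - card R" using assms(1,2) by (simp add: card_Diff_subset finite_subset)
  also have "card R * hi + (card A - card R) * lo \<le> w * hi + (card A - w) * lo"
  proof -
    obtain k where k: "w = card R + k" using assms(3) le_Suc_ex by blast
    have "card A - card R = (card A - w) + k" using k assms(4) by simp
    moreover have "k * lo \<le> k * hi" using assms(7) by (rule mult_le_mono2)
    ultimately show ?thesis using k by (simp add: algebra_simps)
  qed
  finally show ?thesis .
qed

lemma card_proper_P1: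
  fixes S :: "'a::{field,finite} \<times> 'a \<Rightarrow> bool"
  assumes "t0 \<in> P1" "\<not> S t0"
  shows "card {t\<in>P1. S t} \<le> card (UNIV::'a set)"
proof -
  have "{t\<in>P1. S t} \<subset> P1" using assms by auto
  hence "card {t\<in>P1. S t} < card (P1::('a\<times>'a) set)" by (rule psubset_card_mono[OF finite_P1])
  thus ?thesis by (simp add: card_P1)
qed

lemma ub_eta0:
  fixes F :: "expo \<Rightarrow> 'a::{field,finite}"
  defines "Q \<equiv> card (UNIV :: 'a set)"
  assumes R: "in_R 0 dT dX F" and dT: "dT \<ge> 0" and nf: "non_filling F"
  shows "num_points F \<le> min (nat dT) Q * (Q + 1) + (Q + 1 - min (nat dT) Q) * min dX Q"
proof -
  obtain t0 x0 where t0: "t0 \<in> P1" "x0 \<in> P1" "ev F t0 x0 \<noteq> 0" using nf non_filling_ev by blast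
  show ?thesis
  proof (rule fiber_bound[of F, folded Q_def])
    fix t assume t: "t \<in> P1" "\<not>(\<forall>x\<in>P1. ev F t x = 0)"
    then obtain x1 where x1: "x1 \<in> P1" "ev F t x1 \<noteq> 0" by auto
    have "card {x\<in>P1. ev F t x = 0} \<le> dX" by (rule binform_roots[OF binform_fiber[OF R] x1])
    moreover have "card {x\<in>P1. ev F t x = 0} \<le> Q" unfolding Q_def by (rule card_proper_P1[OF x1(1)]) (use x1 in auto)
    ultimately show "card {x\<in>P1. ev F t x = 0} \<le> min dX Q" by simp
  next
    have "{t\<in>P1. \<forall>x\<in>P1. ev F t x = 0} \<subseteq> {t\<in>P1. ev F t x0 = 0}" using t0 by auto
    hence "card {t\<in>P1. \<forall>x\<in>P1. ev F t x = 0} \<le> card {t\<in>P1. ev F t x0 = 0}" by (intro card_mono) auto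
    also have "\<dots> \<le> nat dT" by (rule binform_roots[OF binform_eta0[OF R dT] t0(1)]) (use t0 in auto)
    finally have a: "card {t\<in>P1. \<forall>x\<in>P1. ev F t x = 0} \<le> nat dT" .
    have "card {t\<in>P1. \<forall>x\<in>P1. ev F t x = 0} \<le> Q" unfolding Q_def by (rule card_proper_P1[OF t0(1)]) (use t0 in auto)
    with a show "card {t\<in>P1. \<forall>x\<in>P1. ev F t x = 0} \<le> min (nat dT) Q" by simp
  qed auto
qed

lemma ub_iii:
  fixes F :: "expo \<Rightarrow> 'a::{field,finite}"
  defines "Q \<equiv> card (UNIV :: 'a set)"
  assumes R: "in_R \<eta> dT dX F" and dX: "dX \<le> Q" and nf: "non_filling F"
  shows "num_points F \<le> Q * (Q + 1) + dX"
proof -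
  obtain t0 x0 where t0: "t0 \<in> P1" "x0 \<in> P1" "ev F t0 x0 \<noteq> 0" using nf non_filling_ev by blast
  have "num_points F \<le> Q * (Q + 1) + (Q + 1 - Q) * dX"
  proof (rule fiber_bound[of F, folded Q_def])
    fix t assume t: "t \<in> P1" "\<not>(\<forall>x\<in>P1. ev F t x = 0)"
    then obtain x1 where x1: "x1 \<in> P1" "ev F t x1 \<noteq> 0" by auto
    show "card {x\<in>P1. ev F t x = 0} \<le> dX" by (rule binform_roots[OF binform_fiber[OF R] x1])
  next
    show "card {t\<in>P1. \<forall>x\<in>P1. ev F t x = 0} \<le> Q" unfolding Q_def by (rule card_proper_P1[OF t0(1)]) (use t0 in auto)
  qed (use dX in auto)
  thus ?thesis by simp
qed

lemma ub_ia:
  fixes F :: "expo \<Rightarrow> 'a::{field,finite}"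
  defines "Q \<equiv> card (UNIV :: 'a set)"
  assumes R: "in_R \<eta> dT 0 F" and dT: "dT \<ge> 0" and nf: "non_filling F"
  shows "num_points F \<le> nat dT * (Q + 1)"
proof -
  obtain t0 x0 where t0: "t0 \<in> P1" "x0 \<in> P1" "ev F t0 x0 \<noteq> 0" using nf non_filling_ev by blast
  have evc: "ev F t x = phi \<eta> dT 0 F 0 t" for t x using ev_struct[OF R] by simp
  let ?Z = "{t\<in>P1. \<forall>x\<in>P1. ev F t x = 0}"
  have Zs: "?Z \<subseteq> {t\<in>P1. phi \<eta> dT 0 F 0 t = 0}" using evc by auto
  have "card {t\<in>P1. phi \<eta> dT 0 F 0 t = 0} \<le> nj \<eta> dT 0"
    by (rule binform_roots[OF binform_phi t0(1)]) (use dT t0 evc in auto)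
  hence cZ: "card ?Z \<le> nat dT" using card_mono[OF _ Zs] by (simp add: nj_def)
  have "num_points F \<le> card ?Z * (Q + 1) + (Q + 1 - card ?Z) * 0"
  proof (rule fiber_bound[of F, folded Q_def])
    fix t assume t: "t \<in> P1" "\<not>(\<forall>x\<in>P1. ev F t x = 0)"
    hence "phi \<eta> dT 0 F 0 t \<noteq> 0" using evc by auto
    thus "card {x\<in>P1. ev F t x = 0} \<le> 0" using evc by simp
  next
    show "card ?Z \<le> Q + 1" using card_P1_le[of "\<lambda>t. \<forall>x\<in>P1. ev F t x = 0"] Q_def by simp
  qed auto
  moreover have "card ?Z * (Q + 1) \<le> nat dT * (Q + 1)" using cZ by (rule mult_le_mono1)
  ultimately show ?thesis by simp
qed

lemma least_v:
  fixes F :: "expo \<Rightarrow> 'a::{field,finite}"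
  assumes R: "in_R \<eta> dT dX F" and nf: "non_filling F"
  obtains v where "v \<le> dX" "\<And>j t. j < v \<Longrightarrow> t \<in> (P1::('a\<times>'a) set) \<Longrightarrow> phi \<eta> dT dX F j t = 0"
    "\<exists>t\<in>(P1::('a\<times>'a) set). phi \<eta> dT dX F v t \<noteq> 0" "dT + int \<eta> * int v \<ge> 0"
proof -
  let ?P = "\<lambda>j. j \<le> dX \<and> (\<exists>t\<in>P1. phi \<eta> dT dX F j t \<noteq> 0)"
  have ex: "\<exists>j. ?P j"
  proof (rule ccontr)
    assume "\<not> (\<exists>j. ?P j)"
    hence z: "\<And>j t. j \<le> dX \<Longrightarrow> t \<in> P1 \<Longrightarrow> phi \<eta> dT dX F j t = 0" by auto
    have "\<forall>t\<in>P1. \<forall>x\<in>P1. ev F t x = 0" unfolding ev_struct[OF R] using z by simp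
    thus False using nf non_filling_ev by blast
  qed
  define v where "v = (LEAST j. ?P j)"
  have Pv: "?P v" unfolding v_def by (rule LeastI_ex[OF ex])
  have lt: "\<And>j t. j < v \<Longrightarrow> t \<in> P1 \<Longrightarrow> phi \<eta> dT dX F j t = 0"
  proof -
    fix j and t :: "'a \<times> 'a" assume "j < v" "t \<in> P1"
    hence "\<not> ?P j" unfolding v_def using not_less_Least by blast
    moreover have "j \<le> dX" using \<open>j < v\<close> Pv by auto
    ultimately show "phi \<eta> dT dX F j t = 0" using \<open>t \<in> P1\<close> by auto
  qed
  have "dT + int \<eta> * int v \<ge> 0"
  proof (rule ccontr)
    assume "\<not> ?thesis"
    hence "phi \<eta> dT dX F v t = 0" for t by (intro phi_neg) simp
    thus False using Pv by auto
  qed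
  thus ?thesis using that Pv lt by blast
qed

lemma aff_bound:
  fixes F :: "expo \<Rightarrow> 'a::{field,finite}"
  assumes R: "in_R \<eta> dT dX F" and v: "v \<le> dX" "\<And>j. j < v \<Longrightarrow> phi \<eta> dT dX F j t = 0"
    and nz: "phi \<eta> dT dX F v t \<noteq> 0"
  shows "card {y. ev F t (1,y) = 0} \<le> dX - v"
  unfolding ev_aff[OF R] by (rule aff_roots) (use v nz in auto)

lemma num_le_total: "num_points (F :: expo \<Rightarrow> 'a::{field,finite}) \<le> (card (UNIV::'a set) + 1) * (card (UNIV::'a set) + 1)"
proof -
  have "num_points F \<le> (\<Sum>t\<in>(P1::('a\<times>'a) set). card (UNIV::'a set) + 1)"
    unfolding num_points_sum by (rule sum_mono) (rule card_P1_le)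
  thus ?thesis by (simp add: card_P1)
qed

lemma card_aff_le: "card {y::'a::{field,finite}. P y} \<le> card (UNIV::'a set)"
  by (rule card_mono) auto

lemma arith_ib:
  fixes W E Qi D H :: int
  assumes "W = D - H * E" "E * (Qi + 1 - D + H * E - H * Qi) \<le> 0"
  shows "Qi + 1 + (W * Qi + (Qi + 1 - W) * E) \<le> Qi * (D + 1) + 1"
proof -
  have "Qi + 1 + (W * Qi + (Qi + 1 - W) * E) - (Qi * (D + 1) + 1) = E * (Qi + 1 - D + H * E - H * Qi)"
    unfolding assms(1) by (simp add: algebra_simps)
  thus ?thesis using assms(2) by linarith
qed

lemma ub_ib:
  fixes F :: "expo \<Rightarrow> 'a::{field,finite}"
  defines "Q \<equiv> card (UNIV :: 'a set)"
  assumes R: "in_R \<eta> dT dX F" and eta: "\<eta> \<ge> 2" and dq: "dT + int \<eta> * int dX < int Q"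
    and nf: "non_filling F"
  shows "int (num_points F) \<le> int Q * (dT + int \<eta> * int dX + 1) + 1"
proof -
  obtain v where v: "v \<le> dX" "\<And>j t. j < v \<Longrightarrow> t \<in> P1 \<Longrightarrow> phi \<eta> dT dX F j t = 0"
    "\<exists>t\<in>P1. phi \<eta> dT dX F v t \<noteq> 0" "dT + int \<eta> * int v \<ge> 0"
    using least_v[OF R nf] by blast
  define w where "w = nat (dT + int \<eta> * int v)"
  define e where "e = dX - v"
  define d where "d = dT + int \<eta> * int dX"
  have wd: "int w + int \<eta> * int e = d" unfolding w_def e_def d_def using v(1,4) by (simp add: of_nat_diff algebra_simps)
  have Q2: "Q \<ge> 2" unfolding Q_def by (rule card_field_ge2)
  have ee: "int e \<le> int \<eta> * int e" using eta by (simp add: mult_le_cancel_right1)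
  hence eQ: "e \<le> Q" using wd dq d_def by linarith
  have "int \<eta> * int e \<ge> 0" by simp
  hence "int w < int Q" using wd dq d_def by linarith
  hence wQ: "w \<le> Q + 1" by simp
  obtain t0 where t0: "t0 \<in> P1" "phi \<eta> dT dX F v t0 \<noteq> 0" using v(3) by blast
  let ?R = "{t\<in>P1. phi \<eta> dT dX F v t = 0}"
  have cR: "card ?R \<le> w" unfolding w_def
    using binform_roots[OF binform_phi[OF v(4)] t0] by (simp add: nj_def)
  have "(\<Sum>t\<in>P1. card {y. ev F t (1,y) = 0}) \<le> w * Q + (card (P1::('a\<times>'a) set) - w) * e"
  proof (rule sum_two_level)
    fix t show "card {y. ev F t (1,y) = 0} \<le> Q" unfolding Q_def by (rule card_aff_le)
  next
    fix t assume "t \<in> P1 - ?R"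
    thus "card {y. ev F t (1,y) = 0} \<le> e" unfolding e_def using aff_bound[OF R v(1)] v(2) by auto
  qed (use cR eQ wQ in \<open>auto simp: card_P1 Q_def\<close>)
  hence sA: "(\<Sum>t\<in>P1. card {y. ev F t (1,y) = 0}) \<le> w * Q + (Q + 1 - w) * e" by (simp add: card_P1 Q_def)
  have s0: "card {t\<in>P1. phi \<eta> dT dX F 0 t = 0} \<le> Q + 1" using card_P1_le Q_def by metis
  have "num_points F \<le> (Q + 1) + (w * Q + (Q + 1 - w) * e)"
    using num_points_aff[OF R] sA s0 by linarith
  hence "int (num_points F) \<le> int ((Q + 1) + (w * Q + (Q + 1 - w) * e))" by (simp only: of_nat_le_iff)
  also have "\<dots> = (int Q + 1) + (int w * int Q + (int Q + 1 - int w) * int e)"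
    using wQ by (simp add: of_nat_diff)
  also have "\<dots> \<le> int Q * (d + 1) + 1"
  proof -
    have "int Q + 1 - d + int \<eta> * int e - int \<eta> * int Q \<le> 0"
    proof -
      have "int \<eta> * int Q \<ge> 2 * int Q" using eta by (intro mult_right_mono) auto
      thus ?thesis using wd Q2 by linarith
    qed
    hence "int e * (int Q + 1 - d + int \<eta> * int e - int \<eta> * int Q) \<le> 0"
      by (intro mult_nonneg_nonpos) auto
    moreover have "int w = d - int \<eta> * int e" using wd by simp
    ultimately show ?thesis by (intro arith_ib) auto
  qed
  finally show ?thesis unfolding d_def .
qed

lemma sum_shift_zero:
  fixes f :: "nat \<Rightarrow> 'a::comm_monoid_add"
  assumes "v \<le> N" "\<And>j. j < v \<Longrightarrow> f j = 0"
  shows "(\<Sum>j\<le>N. f j) = (\<Sum>i\<le>N - v. f (v + i))"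
proof -
  have "(\<Sum>j\<le>N. f j) = (\<Sum>j\<in>{v..N}. f j)"
    by (rule sum.mono_neutral_right) (use assms in auto)
  also have "{v..N} = (\<lambda>i. v + i) ` {..N - v}"
  proof (rule set_eqI)
    fix j show "j \<in> {v..N} \<longleftrightarrow> j \<in> (\<lambda>i. v + i) ` {..N - v}"
      using assms(1) by (auto intro!: image_eqI[where x="j - v"])
  qed
  also have "sum f ((\<lambda>i. v + i) ` {..N - v}) = (\<Sum>i\<le>N - v. f (v + i))"
    by (subst sum.reindex) (auto simp: inj_on_def)
  finally show ?thesis .
qed

lemma ev_shift:
  fixes F :: "expo \<Rightarrow> 'a::{field,finite}"
  assumes R: "in_R \<eta> dT dX F" and v: "v \<le> dX" "\<And>j. j < v \<Longrightarrow> phi \<eta> dT dX F j t = 0"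
  shows "ev F t (1,y) = (\<Sum>i\<le>dX - v. phi \<eta> dT dX F (v + i) t * y ^ (dX - v - i))"
  unfolding ev_aff[OF R] by (subst sum_shift_zero[OF v(1)]) (use v(2) in auto)

lemma deg_rp:
  assumes "e = Q + s" "s + u + 2 \<le> Q" "Q \<ge> 1" "e + 2 \<le> 2 * Q"
    "\<And>u'. u' < u \<Longrightarrow> g (s + 1 + u') = 0"
  shows "degree (redpoly Q e g) \<le> Q - 1 - u"
proof (rule degree_le, intro allI impI)
  fix k assume k: "Q - 1 - u < k"
  show "coeff (redpoly Q e g) k = 0"
  proof (cases "k \<ge> Q")
    case True thus ?thesis using coeff_redpoly_high assms by blast
  next
    case False
    hence "coeff (redpoly Q e g) k = g (e - k)" using assms k by (intro coeff_redpoly_mid) auto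
    also have "e - k = s + 1 + (Q - 1 - k)" using assms k False by auto
    also have "g \<dots> = 0" using assms k False by (intro assms(5)) auto
    finally show ?thesis .
  qed
qed

lemma int_ineq_ab:
  fixes a b \<eta> :: int
  assumes "a \<ge> 1" "b \<ge> 0" "\<eta> \<ge> 1"
  shows "a * (\<eta> * b + 2) \<ge> a + b + 1"
proof -
  have "1 * 1 \<le> a * \<eta>" using assms by (intro mult_mono) auto
  hence "1 * b \<le> (a * \<eta>) * b" using assms by (intro mult_right_mono) auto
  hence "a * (\<eta> * b + 2) \<ge> b + 2 * a" by (simp add: algebra_simps)
  thus ?thesis using assms by linarith
qed

lemma count_nonfull:
  fixes A :: "'a::{field,finite} \<times> 'a \<Rightarrow> nat"
  defines "Q \<equiv> card (UNIV :: 'a set)"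
  assumes N: "N \<subseteq> P1" "L \<le> card N" "L \<le> Q + 1" and AN: "\<And>t. t \<in> N \<Longrightarrow> A t \<le> K"
    and AQ: "\<And>t. t \<in> P1 \<Longrightarrow> A t \<le> Q" and K: "K \<le> Q"
  shows "int (\<Sum>t\<in>P1. A t) \<le> int Q * (int Q + 1) - int L * (int Q - int K)"
proof -
  have cP: "card (P1::('a\<times>'a) set) = Q + 1" unfolding Q_def by (rule card_P1)
  have cN: "card N \<le> Q + 1" using card_mono[OF finite_P1 N(1)] cP by simp
  have "(\<Sum>t\<in>P1. A t) \<le> (Q + 1 - L) * Q + (card (P1::('a\<times>'a) set) - (Q + 1 - L)) * K"
  proof (rule sum_two_level)
    show "card (P1 - N) \<le> Q + 1 - L" using N cP by (simp add: card_Diff_subset finite_subset)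
  qed (use AN AQ K N cP in auto)
  hence "(\<Sum>t\<in>P1. A t) \<le> (Q + 1 - L) * Q + L * K" using N(3) cP by simp
  hence "int (\<Sum>t\<in>P1. A t) \<le> int ((Q + 1 - L) * Q + L * K)" by (simp only: of_nat_le_iff)
  also have "\<dots> = (int Q + 1 - int L) * int Q + int L * int K" using N(3) by (simp add: of_nat_diff)
  also have "\<dots> = int Q * (int Q + 1) - int L * (int Q - int K)" by (simp add: algebra_simps)
  finally show ?thesis .
qed

lemma ub_ii_D:
  fixes F :: "expo \<Rightarrow> 'a::{field,finite}"
  defines "Q \<equiv> card (UNIV :: 'a set)"
  assumes R: "in_R \<eta> dT dX F" and eta: "\<eta> \<ge> 2" and nf: "non_filling F"
    and v: "v \<le> dX" "\<And>j t. j < v \<Longrightarrow> t \<in> (P1::('a\<times>'a) set) \<Longrightarrow> phi \<eta> dT dX F j t = 0"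
      "dT + int \<eta> * int v \<ge> 0" "v \<ge> 1"
    and w: "w = nat (dT + int \<eta> * int v)" and e: "dX - v = Q + s"
    and hs: "int \<eta> * int s < int Q - int w"
    and hc1: "int \<eta> * (c - 1) < int Q - int w" and hc2: "int Q - int w \<le> int \<eta> * c"
  shows "int (\<Sum>t\<in>P1. card {y. ev F t (1,y) = 0}) \<le> int Q * (int Q + 1) - (c - int s)"
proof -
  define ee where "ee = dX - v"
  have Q2: "Q \<ge> 2" unfolding Q_def by (rule card_field_ge2)
  have "2 * int s \<le> int \<eta> * int s" using eta by (intro mult_right_mono) auto
  hence s2: "2 * s < Q" using hs by linarith
  hence sQ: "s + 2 \<le> Q" using Q2 by presburger
  have eQ: "ee + 2 \<le> 2 * Q" using sQ e ee_def by simp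
  have cs: "c \<ge> int s + 1"
  proof (rule ccontr)
    assume "\<not> ?thesis"
    hence "c \<le> int s" by simp
    hence "int \<eta> * c \<le> int \<eta> * int s" by (intro mult_left_mono) auto
    thus False using hs hc2 by linarith
  qed
  define rp where "rp = (\<lambda>t. redpoly Q ee (\<lambda>i. phi \<eta> dT dX F (v + i) t))"
  have At: "card {y. ev F t (1,y) = 0} = card {y. poly (rp t) y = 0}" if "t \<in> P1" for t
  proof -
    have "ev F t (1,y) = poly (rp t) y" for y
    proof -
      have "ev F t (1,y) = (\<Sum>i\<le>dX - v. phi \<eta> dT dX F (v + i) t * y ^ (dX - v - i))"
        by (rule ev_shift[OF R v(1) v(2)[OF _ that]])
      also have "\<dots> = poly (rp t) y" unfolding rp_def Q_def poly_redpoly ee_def by simp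
      finally show ?thesis .
    qed
    thus ?thesis by simp
  qed
  have AQ: "card {y. ev F t (1,y) = 0} \<le> Q" for t unfolding Q_def by (rule card_aff_le)
  have Adeg: "card {y. ev F t (1,y) = 0} \<le> degree (rp t)" if "t \<in> P1" "rp t \<noteq> 0" for t
    using At[OF that(1)] card_poly_roots_bound[OF that(2)] by simp
  define U where "U = {u. s + u + 3 \<le> Q \<and> (\<exists>t\<in>(P1::('a\<times>'a) set). phi \<eta> dT dX F (v + (s + 1 + u)) t \<noteq> 0)}"
  show ?thesis
  proof (cases "U = {}")
    case True
    \<comment> \<open>all high coefficients vanish: degree at most s+1\<close>
    have deg: "degree (rp t) \<le> Q - 1 - (Q - 2 - s)" if "t \<in> P1" for t
      unfolding rp_def
    proof (rule deg_rp)
      fix u' assume "u' < Q - 2 - s"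
      hence "u' \<notin> U" using True by auto
      thus "phi \<eta> dT dX F (v + (s + 1 + u')) t = 0" using \<open>u' < Q - 2 - s\<close> that unfolding U_def by auto
    qed (use e ee_def sQ eQ in auto)
    have "\<exists>t\<in>P1. \<exists>y. ev F t (1,y) \<noteq> 0"
    proof -
      obtain t x where tx: "t \<in> P1" "x \<in> P1" "ev F t x \<noteq> 0" using nf non_filling_ev by blast
      have "phi \<eta> dT dX F 0 t = 0" using v(2)[of 0 t] v(4) tx(1) by simp
      hence "ev F t (0,1) = 0" using ev_sigma0[OF R] by simp
      hence "x \<noteq> (0,1)" using tx by auto
      then obtain y where "x = (1,y)" using tx(2) by (auto elim: P1_cases)
      thus ?thesis using tx by auto
    qed
    then obtain t1 y1 where t1: "t1 \<in> P1" "ev F t1 (1,y1) \<noteq> 0" by blast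
    have "rp t1 \<noteq> 0"
    proof
      assume "rp t1 = 0"
      hence "card {y. ev F t1 (1,y) = 0} = Q" using At[OF t1(1)] Q_def by simp
      hence "{y. ev F t1 (1,y) = 0} = UNIV" unfolding Q_def by (metis card_subset_eq finite_UNIV subset_UNIV)
      thus False using t1 by auto
    qed
    have "int (\<Sum>t\<in>P1. card {y. ev F t (1,y) = 0}) \<le> int Q * (int Q + 1) - int 1 * (int Q - int (s + 1))"
    proof (rule count_nonfull[of "{t1}", folded Q_def])
      fix t assume "t \<in> {t1}"
      thus "card {y. ev F t (1,y) = 0} \<le> s + 1" using Adeg[OF t1(1) \<open>rp t1 \<noteq> 0\<close>] deg[OF t1(1)] sQ by simp
    qed (use t1 AQ sQ in auto)
    moreover have "c \<le> int Q - 1"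
    proof -
      have "2 * (c - 1) \<le> int \<eta> * (c - 1)" using eta cs by (intro mult_right_mono) auto
      hence "2 * (c - 1) < int Q" using hc1 by linarith
      thus ?thesis using Q2 by presburger
    qed
    ultimately show ?thesis by simp
  next
    case False
    define u where "u = (LEAST u. u \<in> U)"
    have uU: "u \<in> U" unfolding u_def using False by (metis LeastI_ex ex_in_conv)
    have below: "phi \<eta> dT dX F (v + (s + 1 + u')) t = 0" if "u' < u" "t \<in> P1" for u' t
    proof -
      have "u' \<notin> U" using that(1) unfolding u_def using not_less_Least by blast
      moreover have "s + u' + 3 \<le> Q" using uU that(1) unfolding U_def by auto
      ultimately show ?thesis using that(2) unfolding U_def by auto
    qed
    have su: "s + u + 3 \<le> Q" using uU unfolding U_def by auto
    obtain t0 where t0: "t0 \<in> P1" "phi \<eta> dT dX F (v + (s + 1 + u)) t0 \<noteq> 0" using uU unfolding U_def by auto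
    define V where "V = v + (s + 1 + u)"
    have "int \<eta> * int V \<ge> int \<eta> * int v" unfolding V_def by (intro mult_left_mono) auto
    hence nV: "dT + int \<eta> * int V \<ge> 0" using v(3) by linarith
    define n where "n = nj \<eta> dT V"
    have n1: "int n = dT + int \<eta> * int V" unfolding n_def nj_def using nV by simp
    have w1: "int w = dT + int \<eta> * int v" using v(3) w by simp
    have "int \<eta> * int V = int \<eta> * int v + int \<eta> * int (s + 1 + u)" unfolding V_def by (simp add: algebra_simps)
    hence nw: "int n = int w + int \<eta> * int (s + 1 + u)" using n1 w1 by linarith
    let ?N = "{t\<in>P1. phi \<eta> dT dX F V t \<noteq> 0}"
    have croots: "card {t\<in>P1. phi \<eta> dT dX F V t = 0} \<le> n"
      unfolding n_def by (rule binform_roots[OF binform_phi[OF nV] t0(1)]) (use t0 V_def in auto)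
    have cN: "card ?N = (Q + 1) - card {t\<in>P1. phi \<eta> dT dX F V t = 0}"
    proof -
      have "?N = P1 - {t\<in>P1. phi \<eta> dT dX F V t = 0}" by auto
      thus ?thesis by (simp add: card_Diff_subset card_P1 Q_def)
    qed
    define L where "L = max 1 (Q + 1 - n)"
    have LN: "L \<le> card ?N"
    proof -
      have "t0 \<in> ?N" using t0 V_def by auto
      hence "?N \<noteq> {}" by blast
      moreover have "finite ?N" by simp
      ultimately have "card ?N \<ge> 1" by (simp add: Suc_le_eq card_gt_0_iff)
      thus ?thesis unfolding L_def using cN croots by auto
    qed
    have degu: "degree (rp t) \<le> Q - 1 - u" if "t \<in> P1" for t
      unfolding rp_def by (rule deg_rp) (use e ee_def su eQ below[OF _ that] in auto)
    have "int (\<Sum>t\<in>P1. card {y. ev F t (1,y) = 0}) \<le> int Q * (int Q + 1) - int L * (int Q - int (Q - 1 - u))"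
    proof (rule count_nonfull[of ?N, folded Q_def])
      fix t assume tN: "t \<in> ?N"
      have "coeff (rp t) (Q - 1 - u) = phi \<eta> dT dX F V t"
        unfolding rp_def V_def by (subst coeff_redpoly_mid[of ee Q s]) (use e ee_def su in auto)
      hence "rp t \<noteq> 0" using tN by auto
      moreover have tP: "t \<in> P1" using tN by simp
      ultimately show "card {y. ev F t (1,y) = 0} \<le> Q - 1 - u" using Adeg[OF tP] degu[OF tP] by fastforce
    qed (use LN AQ su L_def in auto)
    moreover have "int L * (int Q - int (Q - 1 - u)) \<ge> c - int s"
    proof -
      have Qu: "int Q - int (Q - 1 - u) = int u + 1" using su by simp
      show ?thesis
      proof (cases "int s + 1 + int u \<ge> c")
        case True
        have "int L \<ge> 1" unfolding L_def by simp
        hence "int L * (int u + 1) \<ge> 1 * (int u + 1)" by (intro mult_right_mono) auto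
        hence "int L * (int u + 1) \<ge> int u + 1" by simp
        thus ?thesis unfolding Qu using True by linarith
      next
        case False
        define b where "b = c - 1 - (int s + 1 + int u)"
        have b0: "b \<ge> 0" using False b_def by simp
        have "int \<eta> * (int s + 1 + int u) + int \<eta> * b = int \<eta> * (c - 1)" unfolding b_def by (simp add: algebra_simps)
        hence "int n + int \<eta> * b \<le> int Q - 1" using nw hc1 by (simp add: algebra_simps)
        moreover have "int \<eta> * b \<ge> 0" using b0 by simp
        ultimately have nQ: "n \<le> Q + 1" by linarith
        hence "int (Q + 1 - n) = int Q + 1 - int n" by (simp add: of_nat_diff)
        hence "int (Q + 1 - n) \<ge> int \<eta> * b + 2" using \<open>int n + int \<eta> * b \<le> int Q - 1\<close> by linarith
        hence "int L \<ge> int \<eta> * b + 2" unfolding L_def by (simp add: of_nat_max)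
        hence "int L * (int u + 1) \<ge> (int \<eta> * b + 2) * (int u + 1)" by (intro mult_right_mono) auto
        moreover have "(int u + 1) * (int \<eta> * b + 2) \<ge> (int u + 1) + b + 1"
          by (rule int_ineq_ab) (use b0 eta in auto)
        ultimately show ?thesis unfolding Qu using b_def by (simp add: algebra_simps)
      qed
    qed
    ultimately show ?thesis by linarith
  qed
qed

lemma ub_ii:
  fixes F :: "expo \<Rightarrow> 'a::{field,finite}"
  defines "Q \<equiv> card (UNIV :: 'a set)"
  assumes R: "in_R \<eta> dT dX F" and eta: "\<eta> \<ge> 2" and nf: "non_filling F"
    and dq: "dT + int \<eta> * int dX < (int \<eta> + 1) * int Q"
  shows "int (num_points F) \<le> int Q ^ 2 + int Q + 1 + (dT + int \<eta> * int dX - int Q) div int \<eta>"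
proof -
  obtain v where v: "v \<le> dX" "\<And>j t. j < v \<Longrightarrow> t \<in> (P1::('a\<times>'a) set) \<Longrightarrow> phi \<eta> dT dX F j t = 0"
    "\<exists>t\<in>(P1::('a\<times>'a) set). phi \<eta> dT dX F v t \<noteq> 0" "dT + int \<eta> * int v \<ge> 0"
    using least_v[OF R nf] by blast
  define w where "w = nat (dT + int \<eta> * int v)"
  define e where "e = dX - v"
  define d where "d = dT + int \<eta> * int dX"
  have wd: "int w + int \<eta> * int e = d" unfolding w_def e_def d_def using v(1,4) by (simp add: of_nat_diff algebra_simps)
  have Q2: "Q \<ge> 2" unfolding Q_def by (rule card_field_ge2)
  have eta0: "int \<eta> > 0" using eta by simp
  define x where "x = int w - int Q"
  define c where "c = - (x div int \<eta>)"
  have hdiv: "(d - int Q) div int \<eta> = int e - c"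
  proof -
    have "d - int Q = x + int e * int \<eta>" unfolding x_def using wd by (simp add: algebra_simps)
    hence "(d - int Q) div int \<eta> = int e + x div int \<eta>" using eta0 by simp
    thus ?thesis unfolding c_def by simp
  qed
  have xm: "int \<eta> * (x div int \<eta>) + x mod int \<eta> = x" using div_mult_mod_eq[of x "int \<eta>"] by (simp add: mult.commute)
  have m0: "x mod int \<eta> \<ge> 0" and m1: "x mod int \<eta> < int \<eta>" using eta0 by auto
  have etac: "int \<eta> * c = - (int \<eta> * (x div int \<eta>))" unfolding c_def by simp
  have etac1: "int \<eta> * (c - 1) = int \<eta> * c - int \<eta>" by (simp add: algebra_simps)
  have hc2: "int Q - int w \<le> int \<eta> * c" using xm m0 etac x_def by linarith
  have hc1: "int \<eta> * (c - 1) < int Q - int w" using xm m1 etac etac1 x_def by linarith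
  obtain t0 where t0: "t0 \<in> P1" "phi \<eta> dT dX F v t0 \<noteq> 0" using v(3) by blast
  let ?R = "{t\<in>P1. phi \<eta> dT dX F v t = 0}"
  have cRw: "card ?R \<le> w" unfolding w_def
    using binform_roots[OF binform_phi[OF v(4)] t0] by (simp add: nj_def)
  have cRQ: "card ?R \<le> Q" unfolding Q_def by (rule card_proper_P1[OF t0(1)]) (use t0 in auto)
  let ?SA = "\<Sum>t\<in>(P1::('a\<times>'a) set). card {y. ev F t (1,y) = 0}"
  let ?S0 = "card {t\<in>(P1::('a\<times>'a) set). phi \<eta> dT dX F 0 t = 0}"
  have num: "num_points F = ?S0 + ?SA" by (rule num_points_aff[OF R])
  have S0: "?S0 \<le> Q + 1" using card_P1_le Q_def by metis
  have AQ: "card {y. ev F t (1,y) = 0} \<le> Q" for t unfolding Q_def by (rule card_aff_le)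
  have SAQ: "?SA \<le> (Q + 1) * Q"
  proof -
    have "?SA \<le> (\<Sum>t\<in>(P1::('a\<times>'a) set). Q)" by (rule sum_mono) (rule AQ)
    thus ?thesis by (simp add: card_P1 Q_def)
  qed
  have goal: "int (num_points F) \<le> int Q ^ 2 + int Q + 1 + int e - c"
  proof (cases "e < Q")
    case True
    define w' where "w' = min w Q"
    have "?SA \<le> w' * Q + (card (P1::('a\<times>'a) set) - w') * e"
    proof (rule sum_two_level)
      fix t show "card {y. ev F t (1,y) = 0} \<le> Q" by (rule AQ)
    next
      fix t assume "t \<in> P1 - ?R"
      thus "card {y. ev F t (1,y) = 0} \<le> e" unfolding e_def using aff_bound[OF R v(1)] v(2) by auto
    qed (use cRw cRQ True in \<open>auto simp: card_P1 Q_def w'_def\<close>)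
    hence "?SA \<le> w' * Q + (Q + 1 - w') * e" by (simp add: card_P1 Q_def)
    hence "int ?SA \<le> int (w' * Q + (Q + 1 - w') * e)" by (simp only: of_nat_le_iff)
    also have "\<dots> = int w' * int Q + (int Q + 1 - int w') * int e" unfolding w'_def by (simp add: of_nat_diff)
    finally have sa: "int ?SA \<le> int w' * int Q + (int Q + 1 - int w') * int e" .
    have key: "c \<le> (int Q - int w') * (int Q - int e)"
    proof (cases "c \<le> 0")
      case True
      have "int w' \<le> int Q" unfolding w'_def by simp
      hence "(int Q - int w') * (int Q - int e) \<ge> 0" using \<open>e < Q\<close> by simp
      thus ?thesis using True by linarith
    next
      case False
      have "int \<eta> * (c - 1) \<ge> 0" using False by simp
      hence wQ: "w < Q" using hc1 by linarith
      hence ww: "w' = w" unfolding w'_def by simp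
      have "int \<eta> * (c - 1) \<ge> c - 1" using mult_right_mono[of 1 "int \<eta>" "c - 1"] False eta by simp
      hence "int Q - int w \<ge> c" using hc1 by linarith
      moreover have "(int Q - int w) * (int Q - int e) \<ge> (int Q - int w)"
        using mult_left_mono[of 1 "int Q - int e" "int Q - int w"] wQ \<open>e < Q\<close> by simp
      ultimately show ?thesis unfolding ww by linarith
    qed
    have "int (num_points F) \<le> int Q + 1 + (int w' * int Q + (int Q + 1 - int w') * int e)"
      using num S0 sa by linarith
    also have "\<dots> = int Q ^ 2 + int Q + 1 + int e - (int Q - int w') * (int Q - int e)"
      by (simp add: algebra_simps power2_eq_square)
    also have "\<dots> \<le> int Q ^ 2 + int Q + 1 + int e - c" using key by linarith
    finally show ?thesis .
  next
    case False
    hence eQ: "e \<ge> Q" by simp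
    show ?thesis
    proof (cases "w \<ge> Q")
      case True
      have "int \<eta> * (c - 1) < 0" using hc1 True by linarith
      hence "c - 1 < 0" using eta0 by (simp add: mult_less_0_iff)
      hence "c \<le> 0" by simp
      have "int (num_points F) \<le> int ((Q + 1) * (Q + 1))" using num_le_total[of F] Q_def by (simp only: of_nat_le_iff)
      also have "\<dots> = int Q ^ 2 + 2 * int Q + 1" by (simp add: algebra_simps power2_eq_square)
      also have "\<dots> \<le> int Q ^ 2 + int Q + 1 + int e - c" using eQ \<open>c \<le> 0\<close> by linarith
      finally show ?thesis .
    next
      case False
      hence wQ: "w < Q" by simp
      have cw: "c \<le> int Q - int w"
      proof (cases "c \<ge> 1")
        case True
        have "int \<eta> * (c - 1) \<ge> c - 1" using mult_right_mono[of 1 "int \<eta>" "c - 1"] True eta by simp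
        thus ?thesis using hc1 by linarith
      qed (use wQ in auto)
      show ?thesis
      proof (cases "v = 0")
        case True
        have "?S0 \<le> w" using cRw True by simp
        hence "int (num_points F) \<le> int w + int ((Q + 1) * Q)" using num SAQ by linarith
        also have "\<dots> \<le> int Q ^ 2 + int Q + 1 + int e - c" using cw eQ by (simp add: algebra_simps power2_eq_square)
        finally show ?thesis .
      next
        case False
        define s where "s = e - Q"
        have es: "dX - v = Q + s" unfolding s_def using eQ e_def by simp
        have hs: "int \<eta> * int s < int Q - int w"
        proof -
          have "int e = int Q + int s" using es e_def by simp
          hence "int \<eta> * int e = int \<eta> * int Q + int \<eta> * int s" by (simp add: algebra_simps)
          thus ?thesis using wd dq d_def by (simp add: algebra_simps)
        qed
        have "int ?SA \<le> int Q * (int Q + 1) - (c - int s)"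
          unfolding Q_def
          by (rule ub_ii_D[OF R eta nf v(1) v(2) v(4) _ w_def es[unfolded Q_def] hs[unfolded Q_def] hc1[unfolded Q_def] hc2[unfolded Q_def]])
             (use False in auto)
        hence "int (num_points F) \<le> int Q + 1 + (int Q * (int Q + 1) - (c - int s))" using num S0 by linarith
        also have "\<dots> = int Q ^ 2 + int Q + 1 + int e - c" using es e_def by (simp add: algebra_simps power2_eq_square)
        finally show ?thesis .
      qed
    qed
  qed
  thus ?thesis using hdiv d_def by simp
qed

definition con :: "nat \<Rightarrow> nat \<Rightarrow> nat \<Rightarrow> nat \<Rightarrow> 'a::comm_ring_1 poly \<Rightarrow> 'a poly \<Rightarrow> expo \<Rightarrow> 'a" where
  "con \<eta> k n1 n2 p r = (\<lambda>(c1,c2,d1,d2). if d2 \<le> n2 \<and> d1 = k + (n2 - d2) \<and> c1 + c2 = n1 + \<eta> * (n2 - d2)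
      \<and> \<eta> * (n2 - d2) \<le> c2 then coeff p (c2 - \<eta> * (n2 - d2)) * coeff r d2 else 0)"

lemma con_in_R: "in_R \<eta> (int n1 - int \<eta> * int k) (k + n2) (con \<eta> k n1 n2 p r)"
  unfolding in_R_def
proof (intro allI impI)
  fix m assume "con \<eta> k n1 n2 p r m \<noteq> 0"
  obtain c1 c2 d1 d2 where m: "m = (c1,c2,d1,d2)" by (cases m) auto
  have h: "d2 \<le> n2" "d1 = k + (n2 - d2)" "c1 + c2 = n1 + \<eta> * (n2 - d2)"
    using \<open>con \<eta> k n1 n2 p r m \<noteq> 0\<close> unfolding m con_def by (auto split: if_splits)
  have "int c1 + int c2 = int n1 + int \<eta> * int (n2 - d2)" using h(3) by (metis of_nat_add of_nat_mult)
  moreover have "int d1 = int k + int (n2 - d2)" using h(2) by simp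
  ultimately have "int c1 + int c2 - int \<eta> * int d1 = int n1 - int \<eta> * int k" by (simp add: algebra_simps)
  moreover have "d1 + d2 = k + n2" using h by simp
  ultimately show "bideg \<eta> m = (int n1 - int \<eta> * int k, k + n2)" unfolding m bideg_def by simp
qed

definition tf :: "nat \<Rightarrow> 'a::comm_ring_1 poly \<Rightarrow> 'a \<times> 'a \<Rightarrow> 'a" where
  "tf n1 p t = (\<Sum>j\<le>n1. coeff p j * fst t ^ (n1 - j) * snd t ^ j)"

definition xf :: "nat \<Rightarrow> 'a::comm_ring_1 poly \<Rightarrow> 'a \<Rightarrow> 'a \<Rightarrow> 'a" where
  "xf n2 r u x2 = (\<Sum>i\<le>n2. coeff r i * x2 ^ i * u ^ (n2 - i))"

lemma con_eval:
  fixes p r :: "'a::comm_ring_1 poly"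
  assumes dp: "degree p \<le> n1"
  shows "eval_poly (con \<eta> k n1 n2 p r) (t1,t2,x1,x2) = x1 ^ k * tf n1 p (t1,t2) * xf n2 r (t2 ^ \<eta> * x1) x2"
proof -
  let ?F = "con \<eta> k n1 n2 p r"
  define I where "I = {..n1} \<times> {..n2}"
  define g where "g = (\<lambda>(j,i). (n1 - j, j + \<eta> * (n2 - i), k + (n2 - i), i))"
  define h where "h = (\<lambda>m. case m of (c1, c2, d1, d2) \<Rightarrow>
          ?F m * t1 ^ c1 * t2 ^ c2 * x1 ^ d1 * x2 ^ d2)"
  have finI: "finite I" unfolding I_def by simp
  have sub: "{m. ?F m \<noteq> 0} \<subseteq> g ` I"
  proof
    fix m assume "m \<in> {m. ?F m \<noteq> 0}"
    hence nz: "?F m \<noteq> 0" by simp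
    obtain c1 c2 d1 d2 where m: "m = (c1,c2,d1,d2)" by (cases m) auto
    have hh: "d2 \<le> n2" "d1 = k + (n2 - d2)" "c1 + c2 = n1 + \<eta> * (n2 - d2)" "\<eta> * (n2 - d2) \<le> c2"
      "coeff p (c2 - \<eta> * (n2 - d2)) \<noteq> 0"
      using nz unfolding m con_def by (auto split: if_splits)
    have "c2 - \<eta> * (n2 - d2) \<le> n1" using hh(5) dp le_degree by (meson order.trans)
    hence "(c2 - \<eta> * (n2 - d2), d2) \<in> I" "g (c2 - \<eta> * (n2 - d2), d2) = m"
      unfolding I_def g_def m using hh by auto
    thus "m \<in> g ` I" by (metis image_eqI)
  qed
  have inj: "inj_on g I" unfolding inj_on_def g_def I_def by auto
  have "eval_poly ?F (t1,t2,x1,x2) = sum h {m. ?F m \<noteq> 0}"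
    unfolding eval_poly_def h_def by simp
  also have "\<dots> = sum h (g ` I)"
    by (rule sum.mono_neutral_left) (use finI sub in \<open>auto simp: h_def split: prod.splits\<close>)
  also have "\<dots> = sum (h \<circ> g) I" by (rule sum.reindex[OF inj])
  also have "\<dots> = (\<Sum>(j,i)\<in>I. x1 ^ k * (coeff p j * t1 ^ (n1 - j) * t2 ^ j) * (coeff r i * x2 ^ i * (t2 ^ \<eta> * x1) ^ (n2 - i)))"
  proof (rule sum.cong[OF refl])
    fix ji assume "ji \<in> I"
    then obtain j i where ji: "ji = (j,i)" "j \<le> n1" "i \<le> n2" unfolding I_def by auto
    have "?F (g (j,i)) = coeff p j * coeff r i" unfolding con_def g_def using ji by auto
    thus "(h \<circ> g) ji = (case ji of (j,i) \<Rightarrow> x1 ^ k * (coeff p j * t1 ^ (n1 - j) * t2 ^ j) * (coeff r i * x2 ^ i * (t2 ^ \<eta> * x1) ^ (n2 - i)))"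
      unfolding ji h_def g_def by (simp add: power_add power_mult_distrib mult_ac flip: power_mult)
  qed
  also have "\<dots> = (\<Sum>j\<le>n1. \<Sum>i\<le>n2. x1 ^ k * (coeff p j * t1 ^ (n1 - j) * t2 ^ j) * (coeff r i * x2 ^ i * (t2 ^ \<eta> * x1) ^ (n2 - i)))"
    unfolding I_def by (rule sum.cartesian_product[symmetric])
  also have "\<dots> = x1 ^ k * tf n1 p (t1,t2) * xf n2 r (t2 ^ \<eta> * x1) x2"
    unfolding tf_def xf_def by (simp add: sum_distrib_left sum_distrib_right) (rule sum.swap)
  finally show ?thesis .
qed

lemma poly_sum_le:
  fixes p :: "'a::comm_ring_1 poly"
  assumes "degree p \<le> n"
  shows "poly p a = (\<Sum>i\<le>n. coeff p i * a ^ i)"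
proof -
  have "poly p a = (\<Sum>i\<le>degree p. coeff p i * a ^ i)" by (rule poly_altdef)
  also have "\<dots> = (\<Sum>i\<le>n. coeff p i * a ^ i)"
    by (rule sum.mono_neutral_left) (use assms in \<open>auto simp: coeff_eq_0\<close>)
  finally show ?thesis .
qed

lemma tf_1: "degree p \<le> n1 \<Longrightarrow> tf n1 p (1,a) = poly p a"
  unfolding tf_def by (simp add: poly_sum_le)

lemma tf_0: "tf n1 p (0,1) = coeff p n1"
proof -
  have "tf n1 p (0,1) = (\<Sum>j\<le>n1. if j = n1 then coeff p j else 0)"
    unfolding tf_def by (rule sum.cong) (auto simp: power_0_left)
  thus ?thesis by simp
qed

lemma xf_1: "degree r \<le> n2 \<Longrightarrow> xf n2 r 1 b = poly r b"
  unfolding xf_def by (simp add: poly_sum_le)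

lemma xf_0: "xf n2 r 0 1 = coeff r n2"
proof -
  have "xf n2 r 0 1 = (\<Sum>i\<le>n2. if i = n2 then coeff r i else 0)"
    unfolding xf_def by (rule sum.cong) (auto simp: power_0_left)
  thus ?thesis by simp
qed

lemma xf_n20: "xf 0 r u x = coeff r 0"
  unfolding xf_def by simp

lemma con_ev:
  assumes "degree p \<le> n1"
  shows "ev (con \<eta> k n1 n2 p r) t x = fst x ^ k * tf n1 p t * xf n2 r (snd t ^ \<eta> * fst x) (snd x)"
  unfolding ev_def pt_def using con_eval[OF assms, of \<eta> k n2 r "fst t" "snd t" "fst x" "snd x"] by simp

lemma con_count:
  fixes p r :: "'a::{field,finite} poly"
  defines "Q \<equiv> card (UNIV :: 'a set)"
  assumes dp: "degree p \<le> n1" "coeff p n1 = 1" and dr: "degree r \<le> n2" "coeff r n2 = 1"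
    and cond: "\<And>t. t \<in> P1 \<Longrightarrow> tf n1 p t \<noteq> 0 \<Longrightarrow> snd t ^ \<eta> = 1 \<or> n2 = 0"
  shows "num_points (con \<eta> k n1 n2 p r) = card {a. poly p a = 0} * (Q + 1)
           + (Q + 1 - card {a. poly p a = 0}) * (card {b. poly r b = 0} + (if k \<ge> 1 then 1 else 0))"
proof -
  let ?F = "con \<eta> k n1 n2 p r"
  let ?N = "\<lambda>t. card {x\<in>P1. ev ?F t x = 0}"
  let ?Z = "{t\<in>(P1::('a\<times>'a) set). tf n1 p t = 0}"
  let ?rho = "card {b. poly r b = 0} + (if k \<ge> 1 then 1 else 0)"
  have cP: "card (P1::('a\<times>'a) set) = Q + 1" unfolding Q_def by (rule card_P1)
  have cZ: "card ?Z = card {a. poly p a = 0}"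
    using card_P1_zero[of "tf n1 p"] dp by (simp add: tf_1 tf_0)
  have NZ: "?N t = Q + 1" if "t \<in> ?Z" for t
  proof -
    have "{x\<in>P1. ev ?F t x = 0} = P1" using that by (auto simp: con_ev[OF dp(1)])
    thus ?thesis using cP by simp
  qed
  have NnZ: "?N t = ?rho" if "t \<in> P1 - ?Z" for t
  proof -
    have t: "t \<in> P1" "tf n1 p t \<noteq> 0" using that by auto
    have x1: "xf n2 r (snd t ^ \<eta>) b = poly r b" for b
      using cond[OF t] dr xf_1[OF dr(1)] xf_n20[of r] by (cases "n2 = 0") (auto simp: poly_sum_le)
    have x0: "xf n2 r 0 1 = 1" using xf_0[of n2 r] dr by simp
    have "?N t = card {b. ev ?F t (1,b) = 0} + (if ev ?F t (0,1) = 0 then 1 else 0)" by (rule card_P1_zero)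
    also have "{b. ev ?F t (1,b) = 0} = {b. poly r b = 0}" using t(2) by (auto simp: con_ev[OF dp(1)] x1)
    also have "(ev ?F t (0,1) = 0) = (k \<ge> 1)" using t(2) by (auto simp: con_ev[OF dp(1)] x0 power_0_left)
    finally show ?thesis by simp
  qed
  have "num_points ?F = (\<Sum>t\<in>P1. ?N t)" by (rule num_points_sum)
  also have "\<dots> = (\<Sum>t\<in>?Z. ?N t) + (\<Sum>t\<in>P1 - ?Z. ?N t)"
    using sum.subset_diff[of ?Z P1 ?N] by (auto simp: add.commute)
  also have "\<dots> = card ?Z * (Q + 1) + card (P1 - ?Z) * ?rho" using NZ NnZ by simp
  also have "card (P1 - ?Z) = Q + 1 - card ?Z" using cP by (simp add: card_Diff_subset)
  finally show ?thesis using cZ by simp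
qed

lemma con_nonfill_0:
  assumes "degree p \<le> n1" "coeff p n1 = 1" "coeff r n2 = 1"
  shows "non_filling (con \<eta> 0 n1 n2 p (r :: 'a::{field,finite} poly))"
  unfolding non_filling_ev
  by (rule bexI[of _ "(0,1)"], rule bexI[of _ "(0,1)"]) (use assms in \<open>auto simp: con_ev tf_0 xf_0\<close>)

lemma con_nonfill_b:
  assumes "degree p \<le> n1" "coeff p n1 = 1" "degree r \<le> n2" "poly r b \<noteq> 0"
  shows "non_filling (con \<eta> k n1 n2 p (r :: 'a::{field,finite} poly))"
  unfolding non_filling_ev
  by (rule bexI[of _ "(0,1)"], rule bexI[of _ "(1,b)"]) (use assms in \<open>auto simp: con_ev tf_0 xf_1\<close>)

lemma mk_poly:
  "\<exists>p :: 'a::{field,finite} poly. degree p \<le> n \<and> coeff p n = 1 \<and> card {a. poly p a = 0} = min n (card (UNIV :: 'a set))"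
proof -
  have "min n (card (UNIV :: 'a set)) \<le> card (UNIV :: 'a set)" by simp
  then obtain S :: "'a set" where S: "card S = min n (card (UNIV :: 'a set))" "finite S"
    using obtain_subset_with_card_n by metis
  have Q2: "card (UNIV :: 'a set) \<ge> 2" by (rule card_field_ge2)
  show ?thesis
  proof (cases "S = {}")
    case True
    hence "n = 0" using S Q2 by auto
    thus ?thesis using True S by (intro exI[of _ 1]) auto
  next
    case False
    then obtain s0 where s0: "s0 \<in> S" by auto
    define p where "p = (\<Prod>s\<in>S. [:-s,1:]) * [:-s0,1:] ^ (n - card S)"
    have nz: "(\<Prod>s\<in>S. [:-s,(1::'a):]) \<noteq> 0" by (simp add: prod_zero_iff S(2))
    have nz2: "[:-s0,(1::'a):] ^ (n - card S) \<noteq> 0" by simp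
    have dprod: "degree (\<Prod>s\<in>S. [:-s,(1::'a):]) = card S"
      by (subst degree_prod_eq_sum_degree) auto
    have "degree p = card S + (n - card S)"
      unfolding p_def by (subst degree_mult_eq[OF nz nz2]) (simp add: dprod degree_power_eq)
    hence dp: "degree p = n" using S by auto
    have lc: "lead_coeff p = 1" unfolding p_def by (simp add: lead_coeff_mult lead_coeff_prod lead_coeff_power)
    have roots: "{a. poly p a = 0} = S"
      unfolding p_def using s0 S(2) by (auto simp: poly_prod prod_zero_iff)
    show ?thesis using dp lc roots S by (intro exI[of _ p]) auto
  qed
qed

lemma all_roots:
  fixes p :: "'a::{field,finite} poly"
  assumes "card {a. poly p a = 0} = card (UNIV :: 'a set)"
  shows "poly p a = 0"
proof -
  have "{a. poly p a = 0} = UNIV" using assms by (metis card_subset_eq finite_UNIV subset_UNIV)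
  thus ?thesis by auto
qed

lemma sharp_boundI:
  assumes "\<And>F :: expo \<Rightarrow> 'a::{field,finite}. in_R \<eta> dT dX F \<Longrightarrow> non_filling F \<Longrightarrow> int (num_points F) \<le> B"
    and "in_R \<eta> dT dX (G :: expo \<Rightarrow> 'a)" "non_filling G" "int (num_points G) = B"
  shows "sharp_bound TYPE('a) \<eta> dT dX B"
  unfolding sharp_bound_def using assms by blast

lemma con_in_R':
  assumes "dT = int n1 - int \<eta> * int k" "dX = k + n2"
  shows "in_R \<eta> dT dX (con \<eta> k n1 n2 p r)"
  unfolding assms by (rule con_in_R)

lemma roots_one: "card {b::'a::{field,finite}. poly 1 b = 0} = 0" by simp

lemma sharp_eta0:
  fixes dT :: int and dX :: nat
  defines "Q \<equiv> card (UNIV :: 'a::{field,finite} set)"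
  assumes dT: "dT \<ge> 0"
  shows "sharp_bound TYPE('a) 0 dT dX
     (int (min (nat dT) Q * (Q + 1) + (Q + 1 - min (nat dT) Q) * min dX Q))"
proof -
  obtain p :: "'a poly" where p: "degree p \<le> nat dT" "coeff p (nat dT) = 1" "card {a. poly p a = 0} = min (nat dT) Q"
    using mk_poly unfolding Q_def by blast
  obtain r :: "'a poly" where r: "degree r \<le> dX" "coeff r dX = 1" "card {a. poly r a = 0} = min dX Q"
    using mk_poly unfolding Q_def by blast
  let ?G = "con 0 0 (nat dT) dX p r"
  show ?thesis
  proof (rule sharp_boundI[of _ _ _ _ ?G])
    fix F :: "expo \<Rightarrow> 'a" assume "in_R 0 dT dX F" "non_filling F"
    hence "num_points F \<le> min (nat dT) Q * (Q + 1) + (Q + 1 - min (nat dT) Q) * min dX Q"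
      using ub_eta0[of dT dX F] dT unfolding Q_def by simp
    thus "int (num_points F) \<le> int (min (nat dT) Q * (Q + 1) + (Q + 1 - min (nat dT) Q) * min dX Q)"
      by (simp only: of_nat_le_iff)
  next
    show "in_R 0 dT dX ?G" by (rule con_in_R') (use dT in auto)
    show "non_filling ?G" by (rule con_nonfill_0) (use p r in auto)
    show "int (num_points ?G) = int (min (nat dT) Q * (Q + 1) + (Q + 1 - min (nat dT) Q) * min dX Q)"
      using con_count[of p "nat dT" r dX 0 0] p r unfolding Q_def by simp
  qed
qed

lemma sharp_ia:
  fixes dT :: int
  defines "Q \<equiv> card (UNIV :: 'a::{field,finite} set)"
  assumes dT: "dT \<ge> 0" "dT < int Q"
  shows "sharp_bound TYPE('a) \<eta> dT 0 (int (nat dT * (Q + 1)))"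
proof -
  obtain p :: "'a poly" where p: "degree p \<le> nat dT" "coeff p (nat dT) = 1" "card {a. poly p a = 0} = min (nat dT) Q"
    using mk_poly unfolding Q_def by blast
  have pm: "min (nat dT) Q = nat dT" using dT by simp
  let ?G = "con \<eta> 0 (nat dT) 0 p 1"
  show ?thesis
  proof (rule sharp_boundI[of _ _ _ _ ?G])
    fix F :: "expo \<Rightarrow> 'a" assume "in_R \<eta> dT 0 F" "non_filling F"
    hence "num_points F \<le> nat dT * (Q + 1)"
      using ub_ia[of \<eta> dT F] dT unfolding Q_def by simp
    thus "int (num_points F) \<le> int (nat dT * (Q + 1))" by (simp only: of_nat_le_iff)
  next
    show "in_R \<eta> dT 0 ?G" by (rule con_in_R') (use dT in auto)
    show "non_filling ?G" by (rule con_nonfill_0) (use p in auto)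
    show "int (num_points ?G) = int (nat dT * (Q + 1))"
      using con_count[of p "nat dT" 1 0 \<eta> 0] p pm unfolding Q_def by simp
  qed
qed

lemma sharp_ib:
  fixes dT :: int and dX :: nat and \<eta> :: nat
  defines "Q \<equiv> card (UNIV :: 'a::{field,finite} set)"
  defines "d \<equiv> dT + int \<eta> * int dX"
  assumes eta: "\<eta> \<ge> 2" and d: "d \<ge> 0" "d < int Q" and dX: "dX \<ge> 1"
  shows "sharp_bound TYPE('a) \<eta> dT dX (int Q * (d + 1) + 1)"
proof -
  obtain p :: "'a poly" where p: "degree p \<le> nat d" "coeff p (nat d) = 1" "card {a. poly p a = 0} = min (nat d) Q"
    using mk_poly unfolding Q_def by blast
  have pm: "min (nat d) Q = nat d" using d by simp
  let ?G = "con \<eta> dX (nat d) 0 p 1"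
  show ?thesis
  proof (rule sharp_boundI[of _ _ _ _ ?G])
    fix F :: "expo \<Rightarrow> 'a" assume "in_R \<eta> dT dX F" "non_filling F"
    thus "int (num_points F) \<le> int Q * (d + 1) + 1"
      using ub_ib[of \<eta> dT dX F] eta d unfolding Q_def d_def by simp
  next
    show "in_R \<eta> dT dX ?G" by (rule con_in_R') (use d d_def in auto)
    show "non_filling ?G" by (rule con_nonfill_b[of _ _ _ _ 0]) (use p in auto)
    have "num_points ?G = nat d * (Q + 1) + (Q + 1 - nat d) * (0 + (if dX \<ge> 1 then 1 else 0))"
      using con_count[of p "nat d" 1 0 \<eta> dX] p pm unfolding Q_def by simp
    hence "num_points ?G = nat d * (Q + 1) + (Q + 1 - nat d)" using dX by simp
    hence "int (num_points ?G) = int (nat d * (Q + 1) + (Q + 1 - nat d))" by simp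
    also have "\<dots> = int (nat d) * (int Q + 1) + (int Q + 1 - int (nat d))"
      using d by (subst of_nat_add, subst of_nat_mult, subst of_nat_diff) auto
    also have "\<dots> = d * (int Q + 1) + (int Q + 1 - d)" using d by simp
    also have "\<dots> = int Q * (d + 1) + 1" by (simp add: algebra_simps)
    finally show "int (num_points ?G) = int Q * (d + 1) + 1" .
  qed
qed

lemma cond_allroots:
  fixes p :: "'a::{field,finite} poly"
  assumes "degree p \<le> na" "card {a. poly p a = 0} = card (UNIV :: 'a set)"
  shows "\<And>t. t \<in> P1 \<Longrightarrow> tf na p t \<noteq> 0 \<Longrightarrow> snd t ^ \<eta> = 1 \<or> nb = 0"
proof -
  fix t :: "'a \<times> 'a" assume t: "t \<in> P1" "tf na p t \<noteq> 0"
  show "snd t ^ \<eta> = 1 \<or> nb = 0"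
  proof (rule P1_cases[OF t(1)])
    fix a assume "t = (1,a)"
    hence "tf na p t = 0" using tf_1[OF assms(1)] all_roots[OF assms(2)] by simp
    thus ?thesis using t by simp
  qed simp
qed

lemma sharp_iii:
  fixes dT :: int and dX :: nat
  defines "Q \<equiv> card (UNIV :: 'a::{field,finite} set)"
  assumes dT: "dT \<ge> int Q" and dX: "dX \<le> Q"
  shows "sharp_bound TYPE('a) \<eta> dT dX (int (Q * (Q + 1) + dX))"
proof -
  obtain p :: "'a poly" where p: "degree p \<le> nat dT" "coeff p (nat dT) = 1" "card {a. poly p a = 0} = min (nat dT) Q"
    using mk_poly unfolding Q_def by blast
  obtain r :: "'a poly" where r: "degree r \<le> dX" "coeff r dX = 1" "card {a. poly r a = 0} = min dX Q"
    using mk_poly unfolding Q_def by blast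
  have pm: "min (nat dT) Q = Q" using dT by simp
  have rm: "min dX Q = dX" using dX by simp
  let ?G = "con \<eta> 0 (nat dT) dX p r"
  show ?thesis
  proof (rule sharp_boundI[of _ _ _ _ ?G])
    fix F :: "expo \<Rightarrow> 'a" assume "in_R \<eta> dT dX F" "non_filling F"
    hence "num_points F \<le> Q * (Q + 1) + dX" using ub_iii[of \<eta> dT dX F] dX unfolding Q_def by simp
    thus "int (num_points F) \<le> int (Q * (Q + 1) + dX)" by (simp only: of_nat_le_iff)
  next
    have "int Q \<ge> 0" by simp
    thus "in_R \<eta> dT dX ?G" by (intro con_in_R') (use dT in auto)
    show "non_filling ?G" by (rule con_nonfill_0) (use p r in auto)
    have "num_points ?G = Q * (Q + 1) + (Q + 1 - Q) * (dX + 0)"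
      using con_count[of p "nat dT" r dX \<eta> 0] p r pm rm cond_allroots[where p=p and na="nat dT" and \<eta>=\<eta> and nb=dX] unfolding Q_def by simp
    thus "int (num_points ?G) = int (Q * (Q + 1) + dX)" by simp
  qed
qed

lemma div_facts:
  fixes x :: int and h :: int
  assumes "h > 0"
  shows "h * (x div h) \<le> x" "x < h * (x div h) + h"
proof -
  have xm: "h * (x div h) + x mod h = x" using div_mult_mod_eq[of x h] by (simp add: mult.commute)
  have "x mod h \<ge> 0" "x mod h < h" using assms by auto
  thus "h * (x div h) \<le> x" "x < h * (x div h) + h" using xm by linarith+
qed

lemma sharp_ii:
  fixes dT :: int and dX :: nat and \<eta> :: nat
  defines "Q \<equiv> card (UNIV :: 'a::{field,finite} set)"
  defines "d \<equiv> dT + int \<eta> * int dX"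
  assumes eta: "\<eta> \<ge> 2" and dTQ: "dT < int Q" and dq: "d < (int \<eta> + 1) * int Q" and Qd: "int Q \<le> d"
  shows "sharp_bound TYPE('a) \<eta> dT dX (int Q ^ 2 + int Q + 1 + (d - int Q) div int \<eta>)"
proof -
  have eta0: "int \<eta> > 0" using eta by simp
  define K where "K = - ((dT - int Q) div int \<eta>)"
  have K1: "int \<eta> * K \<ge> int Q - dT" using div_facts(1)[OF eta0, of "dT - int Q"] unfolding K_def by simp
  have K2: "int \<eta> * (K - 1) < int Q - dT" using div_facts(2)[OF eta0, of "dT - int Q"] unfolding K_def by (simp add: algebra_simps)
  have Kpos: "K \<ge> 1"
  proof (rule ccontr)
    assume "\<not> K \<ge> 1" hence "K \<le> 0" by simp
    hence "int \<eta> * K \<le> 0" using eta0 by (simp add: mult_nonneg_nonpos)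
    thus False using K1 dTQ by linarith
  qed
  have hdiv: "(d - int Q) div int \<eta> = int dX - K"
  proof -
    have e1: "d - int Q = (dT - int Q) + int dX * int \<eta>" unfolding d_def by (simp add: algebra_simps)
    have "((dT - int Q) + int dX * int \<eta>) div int \<eta> = int dX + (dT - int Q) div int \<eta>"
      by (rule div_mult_self1) (use eta0 in simp)
    hence "(d - int Q) div int \<eta> = int dX + (dT - int Q) div int \<eta>" unfolding e1 .
    thus ?thesis unfolding K_def by simp
  qed
  have n2nn: "(d - int Q) div int \<eta> \<ge> 0" using Qd eta0 by (simp add: div_int_pos_iff)
  have n2Q: "(d - int Q) div int \<eta> < int Q"
  proof (rule ccontr)
    assume "\<not> ?thesis"
    hence "int \<eta> * ((d - int Q) div int \<eta>) \<ge> int \<eta> * int Q" using eta0 by (intro mult_left_mono) auto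
    moreover have "int \<eta> * ((d - int Q) div int \<eta>) \<le> d - int Q" by (rule div_facts(1)[OF eta0])
    ultimately show False using dq by (simp add: algebra_simps)
  qed
  define k where "k = nat K"
  define n1 where "n1 = nat (dT + int \<eta> * K)"
  define n2 where "n2 = nat ((d - int Q) div int \<eta>)"
  have kdX: "dX = k + n2" unfolding k_def n2_def using hdiv n2nn Kpos by simp
  have n1Q: "n1 \<ge> Q" unfolding n1_def using K1 by simp
  have n2Q': "n2 < Q" unfolding n2_def using n2Q n2nn by (simp add: nat_less_iff)
  have k1: "k \<ge> 1" unfolding k_def using Kpos by simp
  have dTe: "dT = int n1 - int \<eta> * int k" unfolding n1_def k_def using K1 Kpos dTQ by simp
  obtain p :: "'a poly" where p: "degree p \<le> n1" "coeff p n1 = 1" "card {a. poly p a = 0} = min n1 Q"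
    using mk_poly unfolding Q_def by blast
  obtain r :: "'a poly" where r: "degree r \<le> n2" "coeff r n2 = 1" "card {a. poly r a = 0} = min n2 Q"
    using mk_poly unfolding Q_def by blast
  have pm: "min n1 Q = Q" using n1Q by simp
  have rm: "min n2 Q = n2" using n2Q' by simp
  let ?G = "con \<eta> k n1 n2 p r"
  show ?thesis
  proof (rule sharp_boundI[of _ _ _ _ ?G])
    fix F :: "expo \<Rightarrow> 'a" assume "in_R \<eta> dT dX F" "non_filling F"
    thus "int (num_points F) \<le> int Q ^ 2 + int Q + 1 + (d - int Q) div int \<eta>"
      using ub_ii[of \<eta> dT dX F] eta dq unfolding Q_def d_def by (simp add: algebra_simps)
  next
    show "in_R \<eta> dT dX ?G" by (rule con_in_R'[OF dTe kdX])
    obtain b where "poly r b \<noteq> 0"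
    proof -
      have "{a. poly r a = 0} \<noteq> UNIV" using r rm n2Q' Q_def by auto
      thus ?thesis using that by auto
    qed
    thus "non_filling ?G" by (intro con_nonfill_b) (use p r in auto)
    have "num_points ?G = Q * (Q + 1) + (Q + 1 - Q) * (n2 + 1)"
      using con_count[of p n1 r n2 \<eta> k] p r pm rm k1 cond_allroots[where p=p and na=n1 and \<eta>=\<eta> and nb=n2] unfolding Q_def by simp
    hence "int (num_points ?G) = int Q * (int Q + 1) + int n2 + 1" by (simp add: algebra_simps)
    also have "int n2 = (d - int Q) div int \<eta>" unfolding n2_def using n2nn by simp
    finally show "int (num_points ?G) = int Q ^ 2 + int Q + 1 + (d - int Q) div int \<eta>"
      by (simp add: algebra_simps power2_eq_square)
  qed
qed

theorem corollary5p1: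
  fixes \<eta> :: nat and dT :: int and dX :: nat
  assumes "\<eta> \<noteq> 1"
    and "dT + int \<eta> * int dX \<ge> 0"
  defines "q \<equiv> int (card (UNIV :: 'a::{field,finite} set))"
  defines "d \<equiv> dT + int \<eta> * int dX"
  shows
   "(\<eta> \<ge> 2 \<longrightarrow>
      (q > d \<longrightarrow>
         sharp_bound TYPE('a) \<eta> dT dX
           (if dX = 0 \<and> dT \<ge> 0 then (q + 1) * dT else q * (d + 1) + 1)) \<and>
      (max (real_of_int d / real (\<eta> + 1)) (real_of_int dT) < real_of_int q \<and> q \<le> d \<longrightarrow>
         sharp_bound TYPE('a) \<eta> dT dX
           (q^2 + q + 1 + \<lfloor>real_of_int (d - q) / real \<eta>\<rfloor>)) \<and>
      (real_of_int q \<le> max (real_of_int d / real (\<eta> + 1)) (real_of_int dT) \<and> q \<ge> int dX \<longrightarrow>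
         sharp_bound TYPE('a) \<eta> dT dX (q^2 + q + int dX))) \<and>
    (\<eta> = 0 \<longrightarrow>
      sharp_bound TYPE('a) \<eta> dT dX
        ((q + 1)^2 - max (q - int dX + 1) 1 * max (q - dT + 1) 1))"
proof (intro conjI impI)
  define Q where "Q = card (UNIV :: 'a set)"
  have qQ: "q = int Q" unfolding q_def Q_def by simp
  have d0: "d \<ge> 0" using assms(2) d_def by simp
  {
    assume eta: "\<eta> \<ge> 2"
    {
      assume qd: "q > d"
      show "sharp_bound TYPE('a) \<eta> dT dX (if dX = 0 \<and> dT \<ge> 0 then (q + 1) * dT else q * (d + 1) + 1)"
      proof (cases "dX = 0 \<and> dT \<ge> 0")
        case True
        have "dT < int Q" using qd True d_def qQ by simp
        hence "sharp_bound TYPE('a) \<eta> dT 0 (int (nat dT * (Q + 1)))" using True sharp_ia[where 'a='a, of dT \<eta>] Q_def by simp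
        moreover have "int (nat dT * (Q + 1)) = (q + 1) * dT" using True qQ by (simp add: algebra_simps)
        ultimately show ?thesis using True by simp
      next
        case False
        have "dX \<ge> 1"
        proof (rule ccontr)
          assume "\<not> dX \<ge> 1" hence "dX = 0" by simp
          thus False using False d0 d_def by simp
        qed
        hence "sharp_bound TYPE('a) \<eta> dT dX (int Q * (d + 1) + 1)"
          using sharp_ib[where 'a='a, of \<eta> dT dX] eta d0 qd qQ unfolding d_def Q_def by simp
        moreover have "(if dX = 0 \<and> dT \<ge> 0 then (q + 1) * dT else q * (d + 1) + 1) = int Q * (d + 1) + 1"
          by (subst if_not_P[OF False]) (simp add: qQ)
        ultimately show ?thesis by simp
      qed
    }
    {
      assume h: "max (real_of_int d / real (\<eta> + 1)) (real_of_int dT) < real_of_int q \<and> q \<le> d"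
      have dTq: "dT < q" using h by simp
      have "real_of_int d / real (\<eta> + 1) < real_of_int q" using h by simp
      hence "real_of_int d < real_of_int q * real (\<eta> + 1)" by (simp add: pos_divide_less_eq)
      hence "real_of_int d < real_of_int (q * (int \<eta> + 1))" by (simp add: add.commute)
      hence dq: "d < (int \<eta> + 1) * q" by (simp only: of_int_less_iff mult.commute)
      have fl: "\<lfloor>real_of_int (d - int Q) / real \<eta>\<rfloor> = (d - int Q) div int \<eta>"
        using floor_divide_of_int_eq[of "d - int Q" "int \<eta>"] by simp
      have "sharp_bound TYPE('a) \<eta> dT dX (int Q ^ 2 + int Q + 1 + (d - int Q) div int \<eta>)"
        using sharp_ii[where 'a='a, of \<eta> dT dX] eta dTq dq h qQ unfolding d_def Q_def by simp
      thus "sharp_bound TYPE('a) \<eta> dT dX (q^2 + q + 1 + \<lfloor>real_of_int (d - q) / real \<eta>\<rfloor>)"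
        unfolding qQ fl .
    }
    {
      assume h: "real_of_int q \<le> max (real_of_int d / real (\<eta> + 1)) (real_of_int dT) \<and> q \<ge> int dX"
      have dTq: "dT \<ge> q"
      proof (cases "real_of_int q \<le> real_of_int dT")
        case True thus ?thesis by simp
      next
        case False
        hence "real_of_int q \<le> real_of_int d / real (\<eta> + 1)" using h by (simp add: max_def split: if_splits)
        hence "real_of_int q * real (\<eta> + 1) \<le> real_of_int d" by (simp add: pos_le_divide_eq)
        hence "real_of_int (q * (int \<eta> + 1)) \<le> real_of_int d" by (simp add: add.commute)
        hence "q * (int \<eta> + 1) \<le> d" by (simp only: of_int_le_iff)
        moreover have "int \<eta> * int dX \<le> int \<eta> * q" using h by (intro mult_left_mono) auto
        ultimately show ?thesis unfolding d_def by (simp add: algebra_simps)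
      qed
      have "sharp_bound TYPE('a) \<eta> dT dX (int (Q * (Q + 1) + dX))"
        using sharp_iii[where 'a='a, of dT dX \<eta>] dTq h qQ unfolding Q_def by simp
      moreover have "int (Q * (Q + 1) + dX) = q^2 + q + int dX" unfolding qQ by (simp add: algebra_simps power2_eq_square)
      ultimately show "sharp_bound TYPE('a) \<eta> dT dX (q^2 + q + int dX)" by simp
    }
  }
  {
    assume eta: "\<eta> = 0"
    have dT: "dT \<ge> 0" using assms(2) eta by simp
    define a where "a = min (nat dT) Q"
    define b where "b = min dX Q"
    have "sharp_bound TYPE('a) 0 dT dX (int (a * (Q + 1) + (Q + 1 - a) * b))"
      using sharp_eta0[where 'a='a, of dT dX] dT unfolding a_def b_def Q_def by simp
    moreover have "int (a * (Q + 1) + (Q + 1 - a) * b) = (q + 1)^2 - max (q - int dX + 1) 1 * max (q - dT + 1) 1"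
    proof -
      have aQ: "a \<le> Q" and bQ: "b \<le> Q" unfolding a_def b_def by auto
      have m1: "max (int Q - int dX + 1) 1 = int Q + 1 - int b" unfolding b_def by (auto simp: max_def min_def)
      have m2: "max (int Q - dT + 1) 1 = int Q + 1 - int a" unfolding a_def using dT by (auto simp: max_def min_def)
      have e1: "int (Q + 1 - a) = int Q + 1 - int a" using aQ by (simp add: of_nat_diff)
      have "int (a * (Q + 1) + (Q + 1 - a) * b) = int a * (int Q + 1) + int (Q + 1 - a) * int b"
        by (simp only: of_nat_add of_nat_mult of_nat_1)
      hence lhs: "int (a * (Q + 1) + (Q + 1 - a) * b) = int a * (int Q + 1) + (int Q + 1 - int a) * int b"
        unfolding e1 .
      have rhs: "(q + 1)^2 - max (q - int dX + 1) 1 * max (q - dT + 1) 1 = (int Q + 1)^2 - (int Q + 1 - int b) * (int Q + 1 - int a)"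
        by (simp only: qQ m1 m2)
      show ?thesis unfolding lhs rhs by (simp add: algebra_simps power2_eq_square)
    qed
    ultimately show "sharp_bound TYPE('a) \<eta> dT dX ((q + 1)^2 - max (q - int dX + 1) 1 * max (q - dT + 1) 1)"
      using eta by simp
  }
qed

end
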